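(* For each $r\in\{22,24,26\}$ there exists a binary linear $[n,n-r,3]_2 2$ code with $n=53\cdot 2^{r/2-5}-3$, i.e. of lengths $3389$, $6781$, $13565$ respectively. Consequently $\ell_2(22,2)\le 3389$, $\ell_2(24,2)\le 6781$, $\ell_2(26,2)\le 13565$.
   Context: An $[n,n-r,d]_2R$ code is a binary linear code of length $n$, codimension $r$, minimum distance $d$, and covering radius $R$ (the smallest $R$ such that every vector of $\mathbb{F}_2^r$ is a sum of at most $R$ columns of a parity-check matrix). $\ell_2(r,R)$ denotes the smallest length of a binary linear code of codimension $r$ and covering radius $R$. *)

theory Defs
  imports Main
begin

text \<open>Binary vectors of length m are modelled as functions nat => bool (True = 1)
  vanishing outside {..<m}. A parity-check matrix of size r x n is H :: nat => nat => bool,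
  where H i j is the entry in row i (i < r) and column j (j < n).\<close>

definition bvecs :: "nat \<Rightarrow> (nat \<Rightarrow> bool) set" where
  "bvecs m = {v. \<forall>i. m \<le> i \<longrightarrow> \<not> v i}"

definition hamming_weight :: "nat \<Rightarrow> (nat \<Rightarrow> bool) \<Rightarrow> nat" where
  "hamming_weight m v = card {j. j < m \<and> v j}"

definition hamming_dist :: "nat \<Rightarrow> (nat \<Rightarrow> bool) \<Rightarrow> (nat \<Rightarrow> bool) \<Rightarrow> nat" where
  "hamming_dist m u v = card {j. j < m \<and> u j \<noteq> v j}"

definition pc_code :: "nat \<Rightarrow> nat \<Rightarrow> (nat \<Rightarrow> nat \<Rightarrow> bool) \<Rightarrow> (nat \<Rightarrow> bool) set" where
  "pc_code n r H = {c \<in> bvecs n. \<forall>i<r. even (card {j. j < n \<and> H i j \<and> c j})}"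

text \<open>H is an r x n parity-check matrix of a code of length n and codimension r
  (i.e. H has full row rank, equivalently the code has dimension n - r).\<close>
definition is_pc_matrix :: "nat \<Rightarrow> nat \<Rightarrow> (nat \<Rightarrow> nat \<Rightarrow> bool) \<Rightarrow> bool" where
  "is_pc_matrix n r H \<longleftrightarrow> r \<le> n \<and> card (pc_code n r H) = 2 ^ (n - r)"

definition min_dist :: "nat \<Rightarrow> nat \<Rightarrow> (nat \<Rightarrow> nat \<Rightarrow> bool) \<Rightarrow> nat" where
  "min_dist n r H = Min {hamming_dist n c c' | c c'. c \<in> pc_code n r H \<and> c' \<in> pc_code n r H \<and> c \<noteq> c'}"

definition sum_of_cols :: "nat \<Rightarrow> nat \<Rightarrow> (nat \<Rightarrow> nat \<Rightarrow> bool) \<Rightarrow> nat \<Rightarrow> (nat \<Rightarrow> bool) \<Rightarrow> bool" where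
  "sum_of_cols n r H R s \<longleftrightarrow>
     (\<exists>S. S \<subseteq> {..<n} \<and> card S \<le> R \<and> (\<forall>i<r. s i = odd (card {j \<in> S. H i j})))"

definition covering_radius :: "nat \<Rightarrow> nat \<Rightarrow> (nat \<Rightarrow> nat \<Rightarrow> bool) \<Rightarrow> nat" where
  "covering_radius n r H = (LEAST R. \<forall>s \<in> bvecs r. sum_of_cols n r H R s)"

definition ell2 :: "nat \<Rightarrow> nat \<Rightarrow> nat" where
  "ell2 r R = (LEAST n. \<exists>H. is_pc_matrix n r H \<and> covering_radius n r H = R)"

end

theory Submission
  imports Defs "HOL-Computational_Algebra.Polynomial" "HOL-Library.Z2"
begin


definition xorv :: "(nat \<Rightarrow> bool) \<Rightarrow> (nat \<Rightarrow> bool) \<Rightarrow> (nat \<Rightarrow> bool)" where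
  "xorv u v = (\<lambda>i. u i \<noteq> v i)"

definition zv :: "nat \<Rightarrow> bool" where "zv = (\<lambda>_. False)"

lemma bvecs_finite_card: "finite (bvecs m) \<and> card (bvecs m) = 2 ^ m"
proof -
  have b: "bij_betw (\<lambda>v. {i. v i}) (bvecs m) (Pow {..<m})"
  proof (rule bij_betw_byWitness[where f' = "\<lambda>A i. i \<in> A"])
    show "\<forall>a\<in>bvecs m. (\<lambda>A i. i \<in> A) {i. a i} = a" by auto
    show "\<forall>a'\<in>Pow {..<m}. {i. (\<lambda>A i. i \<in> A) a' i} = a'" by auto
    show "(\<lambda>v. {i. v i}) ` bvecs m \<subseteq> Pow {..<m}"
      by (auto simp: bvecs_def) (meson not_le)
    show "(\<lambda>A i. i \<in> A) ` Pow {..<m} \<subseteq> bvecs m" by (auto simp: bvecs_def)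
  qed
  have "finite (bvecs m)" using bij_betw_finite[OF b] by simp
  moreover have "card (bvecs m) = 2 ^ m" using bij_betw_same_card[OF b] by (simp add: card_Pow)
  ultimately show ?thesis by simp
qed

lemma card_symdiff_parity:
  assumes "finite A" "finite B"
  shows "odd (card ((A - B) \<union> (B - A))) = (odd (card A) \<noteq> odd (card B))"
proof -
  have 1: "card A = card (A - B) + card (A \<inter> B)"
    using assms by (metis Int_commute Un_Diff_Int card_Un_disjoint finite_Diff finite_Int inf_commute Diff_disjoint Int_Diff_disjoint) 
  have 2: "card B = card (B - A) + card (A \<inter> B)"
    using assms by (metis Int_commute Un_Diff_Int card_Un_disjoint finite_Diff finite_Int Int_Diff_disjoint)
  have 3: "card ((A - B) \<union> (B - A)) = card (A - B) + card (B - A)"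
    using assms by (intro card_Un_disjoint) auto
  show ?thesis using 1 2 3 by presburger
qed

lemma code_from_set:
  fixes C :: "(nat \<Rightarrow> bool) set"
  assumes fin: "finite C" and Csub: "C \<subseteq> bvecs r" and z: "zv \<notin> C" and cardC: "card C = n"
    and sat: "\<forall>s\<in>bvecs r. s = zv \<or> s \<in> C \<or> (\<exists>a\<in>C. \<exists>b\<in>C. a \<noteq> b \<and> s = xorv a b)"
    and tri: "\<exists>a\<in>C. \<exists>b\<in>C. a \<noteq> b \<and> xorv a b \<in> C"
    and small: "n + 1 < 2 ^ r"
  shows "\<exists>H. is_pc_matrix n r H \<and> min_dist n r H = 3 \<and> covering_radius n r H = 2"
proof -
  obtain f where bf: "bij_betw f {0..<n} C" using ex_bij_betw_nat_finite[OF fin] cardC by auto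
  define H where "H = (\<lambda>i j. f j i)"
  have fC: "j < n \<Longrightarrow> f j \<in> C" for j using bf by (auto simp: bij_betw_def)
  have finj: "j < n \<Longrightarrow> j' < n \<Longrightarrow> f j = f j' \<Longrightarrow> j = j'" for j j'
    using bf by (auto simp: bij_betw_def inj_on_def)
  have fsurj: "c \<in> C \<Longrightarrow> \<exists>j<n. c = f j" for c
    using bf by (auto simp: bij_betw_def)
  have fb: "j < n \<Longrightarrow> i \<ge> r \<Longrightarrow> \<not> f j i" for i j
    using fC Csub by (auto simp: bvecs_def)
  have fnz: "j < n \<Longrightarrow> f j \<noteq> zv" for j using fC z by metis
  define cs where "cs W = (\<lambda>i. i < r \<and> odd (card {j\<in>W. H i j}))" for W
  have cs_empty: "cs {} = zv" by (simp add: cs_def zv_def)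
  have cs_insert: "cs (insert j W) = xorv (f j) (cs W)" if "j < n" "j \<notin> W" "finite W" for j W
  proof
    fix i
    have e: "{x\<in>insert j W. H i x} = (if H i j then insert j {x\<in>W. H i x} else {x\<in>W. H i x})"
      by auto
    show "cs (insert j W) i = xorv (f j) (cs W) i"
    proof (cases "i < r")
      case False then show ?thesis using fb[of j i] that(1) by (simp add: cs_def xorv_def)
    next
      case True
      have "card {x\<in>insert j W. H i x} = (if H i j then Suc (card {x\<in>W. H i x}) else card {x\<in>W. H i x})"
        using that by (subst e) (simp add: card_insert_if)
      then show ?thesis using True by (simp add: cs_def xorv_def H_def)
    qed
  qed
  have cs_single: "cs {j} = f j" if "j < n" for j
    using cs_insert[of j "{}"] that by (simp add: cs_empty xorv_def zv_def)
  have cs_two: "cs {j, j'} = xorv (f j) (f j')" if "j < n" "j' < n" "j \<noteq> j'" for j j'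
    using cs_insert[of j "{j'}"] that cs_single by simp
  define syn where "syn c = cs {j. j < n \<and> c j}" for c
  have syn_xor: "syn (xorv c c') = xorv (syn c) (syn c')" for c c'
  proof
    fix i
    let ?A = "{j\<in>{j. j < n \<and> c j}. H i j}" and ?B = "{j\<in>{j. j < n \<and> c' j}. H i j}"
    have e: "{j\<in>{j. j < n \<and> xorv c c' j}. H i j} = (?A - ?B) \<union> (?B - ?A)"
      by (auto simp: xorv_def)
    show "syn (xorv c c') i = xorv (syn c) (syn c') i"
      unfolding syn_def cs_def e using card_symdiff_parity[of ?A ?B]
      by (auto simp: xorv_def)
  qed
  have syn_bv: "syn c \<in> bvecs r" for c by (auto simp: syn_def cs_def bvecs_def)
  have code_eq: "pc_code n r H = {c \<in> bvecs n. syn c = zv}"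
  proof -
    have "(\<forall>i<r. even (card {j. j < n \<and> H i j \<and> c j})) = (syn c = zv)" for c
    proof -
      have e: "{j. j < n \<and> H i j \<and> c j} = {j\<in>{j. j < n \<and> c j}. H i j}" for i by auto
      show ?thesis by (auto simp: syn_def cs_def zv_def e fun_eq_iff)
    qed
    then show ?thesis by (auto simp: pc_code_def)
  qed
  have soc: "sum_of_cols n r H R s = (\<exists>S. S \<subseteq> {..<n} \<and> card S \<le> R \<and> (\<forall>i<r. s i = cs S i))"
    for R s by (simp add: sum_of_cols_def cs_def)
  have cov2: "sum_of_cols n r H 2 s" if sB: "s \<in> bvecs r" for s
  proof -
    consider "s = zv" | "s \<in> C" | a b where "a \<in> C" "b \<in> C" "a \<noteq> b" "s = xorv a b"
      using sat sB by blast
    then show ?thesis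
    proof cases
      case 1 then show ?thesis unfolding soc by (intro exI[of _ "{}"]) (auto simp: cs_empty)
    next
      case 2 then obtain j where "j < n" "s = f j" using fsurj by blast
      then show ?thesis unfolding soc by (intro exI[of _ "{j}"]) (auto simp: cs_single)
    next
      case 3
      obtain j where j: "j < n" "a = f j" using fsurj 3 by blast
      obtain j' where j': "j' < n" "b = f j'" using fsurj 3 by blast
      have "j \<noteq> j'" using 3 j j' by auto
      then show ?thesis unfolding soc using j j' 3
        by (intro exI[of _ "{j,j'}"]) (auto simp: cs_two)
    qed
  qed
  have cov1: "\<not> (\<forall>s\<in>bvecs r. sum_of_cols n r H 1 s)"
  proof
    assume A: "\<forall>s\<in>bvecs r. sum_of_cols n r H 1 s"
    have "bvecs r \<subseteq> insert zv C"
    proof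
      fix s assume s: "s \<in> bvecs r"
      have "sum_of_cols n r H 1 s" using A s by blast
      then obtain S where S: "S \<subseteq> {..<n}" "card S \<le> 1" "\<forall>i<r. s i = cs S i"
        unfolding soc by blast
      have fS: "finite S" using S(1) finite_subset by blast
      have eq: "s = cs S"
      proof
        fix i show "s i = cs S i"
        proof (cases "i < r")
          case True then show ?thesis using S(3) by simp
        next
          case False then show ?thesis using s by (simp add: bvecs_def cs_def)
        qed
      qed
      have "card S = 0 \<or> card S = Suc 0" using S(2) by linarith
      then have "S = {} \<or> (\<exists>j. S = {j})" using fS card_1_singleton_iff[of S] by simp
      then show "s \<in> insert zv C"
      proof
        assume "S = {}" then show ?thesis using eq cs_empty by simp
      next
        assume "\<exists>j. S = {j}"
        then obtain j where j: "S = {j}" by blast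
        then have "j < n" using S(1) by simp
        then show ?thesis using eq j cs_single fC by simp
      qed
    qed
    then have "card (bvecs r) \<le> card (insert zv C)" using fin by (intro card_mono) simp_all
    also have "\<dots> \<le> n + 1" using fin cardC by (simp add: card_insert_if)
    finally show False using small bvecs_finite_card[of r] by simp
  qed
  have CR: "covering_radius n r H = 2"
    unfolding covering_radius_def
  proof (rule Least_equality)
    show "\<forall>s\<in>bvecs r. sum_of_cols n r H 2 s" using cov2 by blast
    fix R assume "\<forall>s\<in>bvecs r. sum_of_cols n r H R s"
    show "2 \<le> R"
    proof (rule ccontr)
      assume "\<not> 2 \<le> R"
      then have "R \<le> 1" by simp
      then have "\<forall>s\<in>bvecs r. sum_of_cols n r H 1 s"
        using \<open>\<forall>s\<in>bvecs r. sum_of_cols n r H R s\<close> unfolding sum_of_cols_def by (meson order_trans)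
      then show False using cov1 by blast
    qed
  qed
  have surj: "\<exists>c\<in>bvecs n. syn c = t" if tB: "t \<in> bvecs r" for t
  proof -
    have "sum_of_cols n r H 2 t" using cov2[OF tB] .
    then obtain S where S: "S \<subseteq> {..<n}" "\<forall>i<r. t i = cs S i" unfolding soc by blast
    have e: "{j. j < n \<and> j \<in> S} = S" using S(1) by auto
    have "syn (\<lambda>j. j \<in> S) = t"
    proof
      fix i show "syn (\<lambda>j. j \<in> S) i = t i"
        using S(2) tB by (cases "i < r") (auto simp: syn_def e cs_def bvecs_def)
    qed
    moreover have "(\<lambda>j. j \<in> S) \<in> bvecs n" using S(1) by (auto simp: bvecs_def)
    ultimately show ?thesis by blast
  qed
  define sg where "sg t = (SOME c. c \<in> bvecs n \<and> syn c = t)" for t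
  have sg: "sg t \<in> bvecs n \<and> syn (sg t) = t" if "t \<in> bvecs r" for t
    unfolding sg_def using someI_ex[of "\<lambda>c. c \<in> bvecs n \<and> syn c = t"] surj[OF that] by blast
  let ?K = "pc_code n r H"
  have xor_bv: "c \<in> bvecs m \<Longrightarrow> c' \<in> bvecs m \<Longrightarrow> xorv c c' \<in> bvecs m" for c c' m
    by (auto simp: bvecs_def xorv_def)
  have xx: "xorv (xorv a b) b = a" for a b by (auto simp: xorv_def)
  have xz: "xorv a zv = a" "xorv zv a = a" for a by (auto simp: xorv_def zv_def)
  have xeq: "xorv a b = zv \<longleftrightarrow> a = b" for a b by (auto simp: xorv_def zv_def fun_eq_iff)
  have bij: "bij_betw (\<lambda>(k, t). xorv k (sg t)) (?K \<times> bvecs r) (bvecs n)"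
  proof (rule bij_betw_imageI)
    show "inj_on (\<lambda>(k, t). xorv k (sg t)) (?K \<times> bvecs r)"
    proof (rule inj_onI, clarify)
      fix k t k' t' assume k: "k \<in> ?K" "t \<in> bvecs r" "k' \<in> ?K" "t' \<in> bvecs r"
        and e: "xorv k (sg t) = xorv k' (sg t')"
      have "syn (xorv k (sg t)) = syn (xorv k' (sg t'))" using e by simp
      then have tt: "t = t'" using k sg code_eq by (simp add: syn_xor xz)
      have "xorv (xorv k (sg t)) (sg t) = xorv (xorv k' (sg t')) (sg t')" using e tt by simp
      then show "k = k' \<and> t = t'" using tt by (simp add: xx)
    qed
    show "(\<lambda>(k, t). xorv k (sg t)) ` (?K \<times> bvecs r) = bvecs n"
    proof
      show "(\<lambda>(k, t). xorv k (sg t)) ` (?K \<times> bvecs r) \<subseteq> bvecs n"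
        using sg code_eq xor_bv by auto
      show "bvecs n \<subseteq> (\<lambda>(k, t). xorv k (sg t)) ` (?K \<times> bvecs r)"
      proof
        fix c assume c: "c \<in> bvecs n"
        let ?t = "syn c"
        have t: "?t \<in> bvecs r" by (rule syn_bv)
        have "xorv c (sg ?t) \<in> ?K"
          using code_eq c sg[OF t] xor_bv syn_xor xeq by auto
        moreover have "c = xorv (xorv c (sg ?t)) (sg ?t)" using xx by simp
        ultimately show "c \<in> (\<lambda>(k, t). xorv k (sg t)) ` (?K \<times> bvecs r)" using t by force
      qed
    qed
  qed
  have finK: "finite ?K" using bvecs_finite_card[of n] code_eq by auto
  have "card (bvecs n) = card ?K * card (bvecs r)"
    using bij_betw_same_card[OF bij] by (simp add: card_cartesian_product)
  then have cnt: "2 ^ n = card ?K * 2 ^ r" using bvecs_finite_card by simp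
  have zK: "zv \<in> ?K" using code_eq by (auto simp: bvecs_def zv_def syn_def cs_def)
  then have "card ?K \<ge> 1" using finK by (metis One_nat_def Suc_leI card_gt_0_iff empty_iff)
  then have "(2::nat) ^ r \<le> 2 ^ n" using cnt by simp
  then have rn: "r \<le> n" by simp
  then have "(2::nat) ^ n = 2 ^ (n - r) * 2 ^ r" by (simp add: power_add[symmetric])
  then have "card ?K = 2 ^ (n - r)" using cnt by simp
  then have PC: "is_pc_matrix n r H" using rn by (simp add: is_pc_matrix_def)
  let ?D = "{hamming_dist n c c' | c c'. c \<in> ?K \<and> c' \<in> ?K \<and> c \<noteq> c'}"
  have wsyn: "syn c = cs W" if "W = {j. j < n \<and> c j}" for c W using that syn_def by simp
  have Dge: "3 \<le> d" if dD: "d \<in> ?D" for d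
  proof -
    obtain c c' where cc: "c \<in> ?K" "c' \<in> ?K" "c \<noteq> c'" "d = hamming_dist n c c'" using dD by blast
    define e where "e = xorv c c'"
    define W where "W = {j. j < n \<and> e j}"
    have dW: "d = card W" using cc by (simp add: hamming_dist_def W_def e_def xorv_def)
    have se: "syn e = zv" using cc code_eq by (simp add: e_def syn_xor xz)
    have se2: "cs W = zv" using se wsyn W_def by simp
    have fW: "finite W" by (simp add: W_def)
    have "W \<noteq> {}"
    proof
      assume "W = {}"
      then have "\<forall>j<n. c j = c' j" by (auto simp: W_def e_def xorv_def)
      moreover have "\<forall>j\<ge>n. c j = c' j" using cc code_eq by (auto simp: bvecs_def)
      ultimately have "c = c'" by (intro ext) (metis not_le)
      then show False using cc by simp
    qed
    then have "card W \<noteq> 0" using fW by simp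
    moreover have "card W \<noteq> 1"
    proof
      assume "card W = 1"
      then obtain j where jW: "W = {j}" by (auto simp: card_Suc_eq)
      then have "j < n" by (auto simp: W_def)
      then show False using se2 cs_single fnz jW by auto
    qed
    moreover have "card W \<noteq> 2"
    proof
      assume "card W = 2"
      then obtain j j' where "W = {j, j'}" "j \<noteq> j'" by (auto simp: card_Suc_eq numeral_2_eq_2)
      moreover then have "j < n" "j' < n" by (auto simp: W_def)
      ultimately have "xorv (f j) (f j') = zv" "j < n" "j' < n" "j \<noteq> j'" using se2 cs_two by auto
      then show False using finj xeq by blast
    qed
    ultimately show ?thesis using dW by simp
  qed
  have D3: "3 \<in> ?D"
  proof -
    obtain a b where ab: "a \<in> C" "b \<in> C" "a \<noteq> b" "xorv a b \<in> C" using tri by blast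
    obtain j1 where j1: "j1 < n" "a = f j1" using fsurj ab by blast
    obtain j2 where j2: "j2 < n" "b = f j2" using fsurj ab by blast
    obtain j3 where j3: "j3 < n" "xorv a b = f j3" using fsurj ab by blast
    have "j1 \<noteq> j2" using ab j1 j2 by auto
    have "j3 \<noteq> j1"
    proof
      assume "j3 = j1" then have "xorv a b = a" using j1 j3 by simp
      then have "b = zv" by (auto simp: xorv_def zv_def fun_eq_iff)
      then show False using ab z by simp
    qed
    have "j3 \<noteq> j2"
    proof
      assume "j3 = j2" then have "xorv a b = b" using j2 j3 by simp
      then have "a = zv" by (auto simp: xorv_def zv_def fun_eq_iff)
      then show False using ab z by simp
    qed
    define W where "W = {j1, j2, j3}"
    define e where "e = (\<lambda>j. j \<in> W)"
    have We: "W = {j. j < n \<and> e j}" using j1 j2 j3 by (auto simp: W_def e_def)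
    have "cs W = xorv (f j1) (xorv (f j2) (f j3))"
      using cs_insert[of j1 "{j2,j3}"] cs_two[of j2 j3] j1 j2 j3 \<open>j1 \<noteq> j2\<close> \<open>j3 \<noteq> j1\<close> \<open>j3 \<noteq> j2\<close>
      by (simp add: W_def)
    also have "\<dots> = zv"
    proof -
      have "f j3 = xorv (f j1) (f j2)" using j1 j2 j3 by simp
      then show ?thesis by (auto simp: xorv_def zv_def fun_eq_iff)
    qed
    finally have "syn e = zv" using wsyn We by simp
    moreover have "e \<in> bvecs n" using j1 j2 j3 by (auto simp: e_def W_def bvecs_def)
    ultimately have eK: "e \<in> ?K" using code_eq by simp
    have "e \<noteq> zv" by (auto simp: e_def W_def zv_def fun_eq_iff)
    moreover have "hamming_dist n e zv = 3"
    proof -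
      have "{j. j < n \<and> e j \<noteq> zv j} = W" using We by (auto simp: zv_def)
      then show ?thesis using \<open>j1 \<noteq> j2\<close> \<open>j3 \<noteq> j1\<close> \<open>j3 \<noteq> j2\<close>
        by (auto simp: hamming_dist_def W_def)
    qed
    ultimately show ?thesis using eK zK by (metis (mono_tags, lifting) mem_Collect_eq)
  qed
  have finD: "finite ?D"
  proof (rule finite_subset)
    show "?D \<subseteq> {..n}"
    proof
      fix d assume "d \<in> ?D"
      then obtain c c' where "d = hamming_dist n c c'" by blast
      moreover have "card {j. j < n \<and> c j \<noteq> c' j} \<le> card {..<n}" by (intro card_mono) auto
      ultimately show "d \<in> {..n}" by (simp add: hamming_dist_def)
    qed
  qed simp
  have MD: "min_dist n r H = 3"
    unfolding min_dist_def by (rule Min_eqI[OF finD]) (use Dge D3 in auto)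
  show ?thesis using PC MD CR by blast
qed


lemma bit_cases2: "(b::bit) = 0 \<or> b = 1"
  by (cases b) auto

lemma bit_add_self: "(b::bit) + b = 0"
  using bit_cases2[of b] by auto

lemma poly_add_self: "(x :: bit poly) + x = 0"
proof (rule poly_eqI)
  fix n
  have "coeff (x + x) n = coeff x n + coeff x n" by (rule coeff_add)
  also have "\<dots> = 0" by (rule bit_add_self)
  finally show "coeff (x + x) n = coeff 0 n" by simp
qed

lemma poly5:
  assumes "degree (f::bit poly) \<le> 4"
  shows "f = [:coeff f 0, coeff f 1, coeff f 2, coeff f 3, coeff f 4:]"
proof (rule poly_eqI)
  fix n
  show "coeff f n = coeff [:coeff f 0, coeff f 1, coeff f 2, coeff f 3, coeff f 4:] n"
  proof (cases "n < 5")
    case True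
    then have "n = 0 \<or> n = 1 \<or> n = 2 \<or> n = 3 \<or> n = 4" by auto
    then show ?thesis by (auto simp: numeral_eq_Suc)
  next
    case False
    then have n: "n = Suc (Suc (Suc (Suc (Suc (n - 5)))))" by simp
    have "coeff f n = 0" using assms False by (intro coeff_eq_0) simp
    then show ?thesis by (subst n) simp
  qed
qed

lemma nf_check:
  fixes p :: "bit poly"
  assumes "\<And>a b c d e. 1 \<le> degree [:a,b,c,d,e:] \<Longrightarrow> p mod [:a,b,c,d,e:] \<noteq> 0"
  shows "\<forall>f. 1 \<le> degree f \<and> degree f \<le> 4 \<longrightarrow> \<not> f dvd p"
proof (intro allI impI)
  fix f :: "bit poly" assume f: "1 \<le> degree f \<and> degree f \<le> 4"
  then have e: "f = [:coeff f 0, coeff f 1, coeff f 2, coeff f 3, coeff f 4:]" by (intro poly5) simp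
  have "1 \<le> degree [:coeff f 0, coeff f 1, coeff f 2, coeff f 3, coeff f 4:]" using f e by metis
  then have "p mod [:coeff f 0, coeff f 1, coeff f 2, coeff f 3, coeff f 4:] \<noteq> 0" by (rule assms)
  then have "p mod f \<noteq> 0" using e by metis
  then show "\<not> f dvd p" by (simp add: dvd_eq_mod_eq_0)
qed

lemma inv_exists:
  fixes p d :: "bit poly"
  assumes nf: "\<forall>f. 1 \<le> degree f \<and> degree f \<le> 4 \<longrightarrow> \<not> f dvd p"
    and dp: "degree p \<le> 8" "1 \<le> degree p" and d: "d \<noteq> 0" "degree d < degree p"
  shows "\<exists>w. (d * w) mod p = 1"
proof -
  define I where "I = {a * d + b * p | a b. True}"
  have dI: "d \<in> I" unfolding I_def by (rule CollectI, rule exI[of _ 1], rule exI[of _ 0]) simp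
  have pI: "p \<in> I" unfolding I_def by (rule CollectI, rule exI[of _ 0], rule exI[of _ 1]) simp
  have modI: "x mod y \<in> I" if xI: "x \<in> I" and yI: "y \<in> I" for x y
  proof -
    obtain a1 b1 where x: "x = a1 * d + b1 * p" using xI by (auto simp: I_def)
    obtain a2 b2 where y: "y = a2 * d + b2 * p" using yI by (auto simp: I_def)
    have "x mod y = x - x div y * y" by (simp add: minus_div_mult_eq_mod)
    also have "\<dots> = (a1 - x div y * a2) * d + (b1 - x div y * b2) * p"
      by (simp add: x y algebra_simps)
    finally show ?thesis by (auto simp: I_def)
  qed
  define m where "m = (LEAST m. \<exists>h\<in>I. h \<noteq> 0 \<and> degree h = m)"
  have ex: "\<exists>m h. h \<in> I \<and> h \<noteq> 0 \<and> degree h = m" using dI d by blast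
  obtain g where g: "g \<in> I" "g \<noteq> 0" "degree g = m"
    using LeastI_ex[of "\<lambda>m. \<exists>h\<in>I. h \<noteq> 0 \<and> degree h = m"] ex unfolding m_def by blast
  have gmin: "degree g \<le> degree h" if hI: "h \<in> I" "h \<noteq> 0" for h
  proof -
    have "\<exists>h'\<in>I. h' \<noteq> 0 \<and> degree h' = degree h" using hI by blast
    then have "m \<le> degree h" unfolding m_def by (rule Least_le)
    then show ?thesis using g(3) by simp
  qed
  have divs: "g dvd x" if xI: "x \<in> I" for x
  proof (rule ccontr)
    assume "\<not> g dvd x"
    then have "x mod g \<noteq> 0" by (simp add: dvd_eq_mod_eq_0)
    moreover have "x mod g \<in> I" using modI xI g(1) by blast
    ultimately have "degree g \<le> degree (x mod g)" using gmin by blast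
    moreover have "degree (x mod g) < degree g" using degree_mod_less' g(2) \<open>x mod g \<noteq> 0\<close> by blast
    ultimately show False by simp
  qed
  have gd: "g dvd d" and gp: "g dvd p" using divs dI pI by auto
  have p0: "p \<noteq> 0" using dp by auto
  have "degree g \<le> degree d" using gd d(1) by (rule dvd_imp_degree_le)
  have dg: "degree g = 0"
  proof (rule ccontr)
    assume "degree g \<noteq> 0"
    obtain t where t: "p = g * t" using gp by (rule dvdE)
    have t0: "t \<noteq> 0" using t p0 by auto
    have dt: "degree p = degree g + degree t" using t g(2) t0 by (simp add: degree_mult_eq)
    have tp: "t dvd p" using t by simp
    show False
    proof (cases "degree g \<le> 4")
      case True then show False using nf gp \<open>degree g \<noteq> 0\<close> by auto
    next
      case False
      then have "1 \<le> degree t \<and> degree t \<le> 4" using dt dp \<open>degree g \<le> degree d\<close> d by linarith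
      then show False using nf tp by auto
    qed
  qed
  have "g = [:coeff g 0:]" using dg by (metis degree_0_id)
  moreover have "coeff g 0 \<noteq> 0" using g(2) dg by (metis leading_coeff_0_iff)
  ultimately have g1: "g = 1" using bit_cases2[of "coeff g 0"] by (simp add: one_pCons)
  obtain w s where ws: "w * d + s * p = 1" using g(1) g1 by (auto simp: I_def)
  have "(d * w) mod p = (w * d + s * p) mod p" by (simp add: mult.commute)
  also have "\<dots> = 1 mod p" using ws by simp
  also have "\<dots> = 1" using dp by (intro mod_poly_less) simp
  finally show ?thesis by blast
qed

definition p6 :: "bit poly" where "p6 = [:1,1,0,0,0,0,1:]"
definition p7 :: "bit poly" where "p7 = [:1,1,0,0,0,0,0,1:]"
definition p8 :: "bit poly" where "p8 = [:1,1,0,1,1,0,0,0,1:]"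

lemma nf6: "\<forall>f. 1 \<le> degree f \<and> degree f \<le> 4 \<longrightarrow> \<not> f dvd p6"
proof (rule nf_check)
  fix a b c d e :: bit
  show "1 \<le> degree [:a,b,c,d,e:] \<Longrightarrow> p6 mod [:a,b,c,d,e:] \<noteq> 0"
    unfolding p6_def
    using bit_cases2[of a] bit_cases2[of b] bit_cases2[of c] bit_cases2[of d] bit_cases2[of e]
    by (elim disjE; simp only:; code_simp)
qed


lemma nf7: "\<forall>f. 1 \<le> degree f \<and> degree f \<le> 4 \<longrightarrow> \<not> f dvd p7"
proof (rule nf_check)
  fix a b c d e :: bit
  show "1 \<le> degree [:a,b,c,d,e:] \<Longrightarrow> p7 mod [:a,b,c,d,e:] \<noteq> 0"
    unfolding p7_def
    using bit_cases2[of a] bit_cases2[of b] bit_cases2[of c] bit_cases2[of d] bit_cases2[of e]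
    by (elim disjE; simp only:; code_simp)
qed

lemma nf8: "\<forall>f. 1 \<le> degree f \<and> degree f \<le> 4 \<longrightarrow> \<not> f dvd p8"
proof (rule nf_check)
  fix a b c d e :: bit
  show "1 \<le> degree [:a,b,c,d,e:] \<Longrightarrow> p8 mod [:a,b,c,d,e:] \<noteq> 0"
    unfolding p8_def
    using bit_cases2[of a] bit_cases2[of b] bit_cases2[of c] bit_cases2[of d] bit_cases2[of e]
    by (elim disjE; simp only:; code_simp)
qed

lemma deg_p: "degree p6 = 6" "degree p7 = 7" "degree p8 = 8"
  by (simp_all add: p6_def p7_def p8_def)


datatype bt = BE | BN bt nat bt

fun mem :: "nat \<Rightarrow> bt \<Rightarrow> bool" where
  "mem x BE = False"
| "mem x (BN l a r) = (if x < a then mem x l else x = a \<or> mem x r)"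

fun setbt :: "bt \<Rightarrow> nat set" where
  "setbt BE = {}"
| "setbt (BN l a r) = setbt l \<union> {a} \<union> setbt r"

fun inord :: "bt \<Rightarrow> nat list" where
  "inord BE = []"
| "inord (BN l a r) = inord l @ a # inord r"

lemma mem_sound: "mem x t \<Longrightarrow> x \<in> setbt t"
  by (induction t) (auto split: if_splits)

lemma set_inord: "set (inord t) = setbt t"
  by (induction t) auto

datatype wt = Lf nat | Nd wt wt

definition okm :: "bt \<Rightarrow> nat \<Rightarrow> nat \<Rightarrow> bool" where
  "okm T m a = (m = 0 \<or> (if a = 0 then mem m T else mem a T \<and> mem (xor a m) T))"

fun chk :: "bt \<Rightarrow> nat list \<Rightarrow> nat \<Rightarrow> wt \<Rightarrow> bool" where
  "chk T [] b (Lf a) = okm T b a"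
| "chk T (w # ws) b (Nd l r) = (chk T ws b l \<and> chk T ws (b + w) r)"
| "chk T _ _ _ = False"

fun pw :: "nat \<Rightarrow> nat list" where
  "pw 0 = []"
| "pw (Suc k) = 2 ^ k # pw k"

lemma chk_sound: "chk T (pw k) b t \<Longrightarrow> m < 2 ^ k \<Longrightarrow> \<exists>a. okm T (b + m) a"
proof (induction k arbitrary: b t m)
  case 0
  then show ?case by (cases t) auto
next
  case (Suc k)
  then obtain l r where t: "t = Nd l r" by (cases t) auto
  show ?case
  proof (cases "m < 2 ^ k")
    case True
    then show ?thesis using Suc t by auto
  next
    case False
    then have "m - 2 ^ k < 2 ^ k" using Suc.prems by simp
    then have "\<exists>a. okm T (b + 2 ^ k + (m - 2 ^ k)) a" using Suc t by auto
    then show ?thesis using False by simp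
  qed
qed

lemma pw10: "pw 10 = [512, 256, 128, 64, 32, 16, 8, 4, 2, 1]"
  by (simp add: numeral_eq_Suc)

definition baseT :: bt where "baseT = (BN (BN (BN (BN (BN (BN BE 1 BE) 37 (BN BE 47 BE)) 65 (BN (BN BE 76 BE) 102 BE)) 115 (BN (BN (BN BE 125 BE) 154 BE) 184 (BN (BN BE 208 BE) 288 BE))) 313 (BN (BN (BN (BN BE 332 BE) 344 (BN BE 347 BE)) 352 (BN (BN BE 386 BE) 401 BE)) 434 (BN (BN (BN BE 436 BE) 452 BE) 459 (BN (BN BE 473 BE) 520 BE)))) 537 (BN (BN (BN (BN (BN BE 540 BE) 572 (BN BE 600 BE)) 621 (BN (BN BE 627 BE) 640 BE)) 662 (BN (BN (BN BE 666 BE) 680 BE) 708 (BN (BN BE 724 BE) 733 BE))) 735 (BN (BN (BN (BN BE 776 BE) 780 BE) 827 (BN (BN BE 859 BE) 882 BE)) 904 (BN (BN (BN BE 916 BE) 933 BE) 941 (BN (BN BE 946 BE) 949 BE)))))"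

definition witT :: wt where "witT = (Nd (Nd (Nd (Nd (Nd (Nd (Nd (Nd (Nd (Nd (Lf 0) (Lf 0)) (Nd (Lf 733) (Lf 344))) (Nd (Nd (Lf 776) (Lf 537)) (Nd (Lf 434) (Lf 946)))) (Nd (Nd (Nd (Lf 933) (Lf 724)) (Nd (Lf 37) (Lf 724))) (Nd (Nd (Lf 662) (Lf 65)) (Nd (Lf 115) (Lf 452))))) (Nd (Nd (Nd (Nd (Lf 708) (Lf 520)) (Nd (Lf 459) (Lf 386))) (Nd (Nd (Lf 332) (Lf 102)) (Nd (Lf 640) (Lf 332)))) (Nd (Nd (Nd (Lf 941) (Lf 288)) (Nd (Lf 640) (Lf 102))) (Nd (Nd (Lf 904) (Lf 452)) (Nd (Lf 621) (Lf 941)))))) (Nd (Nd (Nd (Nd (Nd (Lf 540) (Lf 916)) (Nd (Lf 154) (Lf 401))) (Nd (Nd (Lf 1) (Lf 0)) (Nd (Lf 916) (Lf 65)))) (Nd (Nd (Nd (Lf 640) (Lf 859)) (Nd (Lf 76) (Lf 600))) (Nd (Nd (Lf 332) (Lf 904)) (Nd (Lf 1) (Lf 0))))) (Nd (Nd (Nd (Nd (Lf 386) (Lf 76)) (Nd (Lf 65) (Lf 776))) (Nd (Nd (Lf 520) (Lf 600)) (Nd (Lf 386) (Lf 780)))) (Nd (Nd (Nd (Lf 344) (Lf 916)) (Nd (Lf 904) (Lf 347))) (Nd (Nd (Lf 65) (Lf 904)) (Nd (Lf 662) (Lf 76))))))) (Nd (Nd (Nd (Nd (Nd (Nd (Lf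 1) (Lf 0)) (Nd (Lf 662) (Lf 37))) (Nd (Nd (Lf 540) (Lf 666)) (Nd (Lf 386) (Lf 666)))) (Nd (Nd (Nd (Lf 401) (Lf 47)) (Nd (Lf 154) (Lf 662))) (Nd (Nd (Lf 0) (Lf 1)) (Nd (Lf 666) (Lf 572))))) (Nd (Nd (Nd (Nd (Lf 520) (Lf 572)) (Nd (Lf 47) (Lf 776))) (Nd (Nd (Lf 640) (Lf 401)) (Nd (Lf 37) (Lf 780)))) (Nd (Nd (Nd (Lf 37) (Lf 313)) (Nd (Lf 401) (Lf 386))) (Nd (Nd (Lf 47) (Lf 640)) (Nd (Lf 666) (Lf 640)))))) (Nd (Nd (Nd (Nd (Nd (Lf 827) (Lf 313)) (Nd (Lf 313) (Lf 47))) (Nd (Nd (Lf 37) (Lf 520)) (Nd (Lf 0) (Lf 1)))) (Nd (Nd (Nd (Lf 184) (Lf 37)) (Nd (Lf 537) (Lf 434))) (Nd (Nd (Lf 288) (Lf 436)) (Nd (Lf 47) (Lf 540))))) (Nd (Nd (Nd (Nd (Lf 436) (Lf 540)) (Nd (Lf 1) (Lf 0))) (Nd (Nd (Lf 537) (Lf 313)) (Nd (Lf 434) (Lf 680)))) (Nd (Nd (Nd (Lf 288) (Lf 434)) (Nd (Lf 776) (Lf 288))) (Nd (Nd (Lf 1) (Lf 0)) (Nd (Lf 780) (Lf 436)))))))) (Nd (Nd (Nd (Nd (Nd (Nd (Nd (Lf 776) (Lf 344)) (Nd (Lf 347) (Lf 537))) (Nd (Nd (Lf 780) (Lf 600)) (Nd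 (Lf 540) (Lf 332)))) (Nd (Nd (Nd (Lf 332) (Lf 827)) (Nd (Lf 540) (Lf 313))) (Nd (Nd (Lf 600) (Lf 313)) (Nd (Lf 827) (Lf 537))))) (Nd (Nd (Nd (Nd (Lf 347) (Lf 65)) (Nd (Lf 288) (Lf 344))) (Nd (Nd (Lf 288) (Lf 332)) (Nd (Lf 827) (Lf 47)))) (Nd (Nd (Nd (Lf 780) (Lf 537)) (Nd (Lf 0) (Lf 1))) (Nd (Nd (Lf 76) (Lf 37)) (Nd (Lf 520) (Lf 347)))))) (Nd (Nd (Nd (Nd (Nd (Lf 520) (Lf 780)) (Nd (Lf 288) (Lf 115))) (Nd (Nd (Lf 352) (Lf 776)) (Nd (Lf 572) (Lf 627)))) (Nd (Nd (Nd (Lf 313) (Lf 621)) (Nd (Lf 572) (Lf 352))) (Nd (Nd (Lf 627) (Lf 125)) (Nd (Lf 627) (Lf 827))))) (Nd (Nd (Nd (Nd (Lf 621) (Lf 288)) (Nd (Lf 621) (Lf 827))) (Nd (Nd (Lf 540) (Lf 47)) (Nd (Lf 102) (Lf 627)))) (Nd (Nd (Nd (Lf 0) (Lf 1)) (Nd (Lf 776) (Lf 313))) (Nd (Nd (Lf 572) (Lf 776)) (Nd (Lf 780) (Lf 37))))))) (Nd (Nd (Nd (Nd (Nd (Nd (Lf 882) (Lf 540)) (Nd (Lf 600) (Lf 540))) (Nd (Nd (Lf 537) (Lf 125)) (Nd (Lf 537) (Lf 882)))) (Nd (Nd (Nd (Lf 540) (Lf 344)) (Nd (Lf 347) (Lf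 115))) (Nd (Nd (Lf 520) (Lf 537)) (Nd (Lf 332) (Lf 859))))) (Nd (Nd (Nd (Nd (Lf 0) (Lf 1)) (Nd (Lf 352) (Lf 859))) (Nd (Nd (Lf 352) (Lf 520)) (Nd (Lf 76) (Lf 520)))) (Nd (Nd (Nd (Lf 540) (Lf 347)) (Nd (Lf 344) (Lf 65))) (Nd (Nd (Lf 520) (Lf 332)) (Nd (Lf 102) (Lf 882)))))) (Nd (Nd (Nd (Nd (Nd (Lf 313) (Lf 572)) (Nd (Lf 352) (Lf 572))) (Nd (Nd (Lf 288) (Lf 627)) (Nd (Lf 882) (Lf 125)))) (Nd (Nd (Nd (Lf 572) (Lf 115)) (Nd (Lf 344) (Lf 288))) (Nd (Nd (Lf 344) (Lf 621)) (Nd (Lf 859) (Lf 347))))) (Nd (Nd (Nd (Nd (Lf 600) (Lf 352)) (Nd (Lf 313) (Lf 627))) (Nd (Nd (Lf 76) (Lf 37)) (Nd (Lf 859) (Lf 621)))) (Nd (Nd (Nd (Lf 332) (Lf 65)) (Nd (Lf 882) (Lf 621))) (Nd (Nd (Lf 102) (Lf 313)) (Nd (Lf 332) (Lf 47))))))))) (Nd (Nd (Nd (Nd (Nd (Nd (Nd (Nd (Lf 76) (Lf 627)) (Nd (Lf 662) (Lf 600))) (Nd (Nd (Lf 520) (Lf 37)) (Nd (Lf 102) (Lf 572)))) (Nd (Nd (Nd (Lf 640) (Lf 208)) (Nd (Lf 184) (Lf 154))) (Nd (Nd (Lf 184) (Lf 65)) (Nd (Lf 666) (Lf 47))))) (Nd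 (Nd (Nd (Nd (Lf 540) (Lf 537)) (Nd (Lf 666) (Lf 115))) (Nd (Nd (Lf 76) (Lf 537)) (Nd (Lf 47) (Lf 76)))) (Nd (Nd (Nd (Lf 154) (Lf 65)) (Nd (Lf 65) (Lf 208))) (Nd (Nd (Lf 37) (Lf 125)) (Nd (Lf 662) (Lf 621)))))) (Nd (Nd (Nd (Nd (Nd (Lf 0) (Lf 1)) (Nd (Lf 537) (Lf 662))) (Nd (Nd (Lf 662) (Lf 125)) (Nd (Lf 125) (Lf 540)))) (Nd (Nd (Nd (Lf 115) (Lf 184)) (Nd (Lf 102) (Lf 115))) (Nd (Nd (Lf 76) (Lf 640)) (Nd (Lf 154) (Lf 666))))) (Nd (Nd (Nd (Nd (Lf 572) (Lf 125)) (Nd (Lf 640) (Lf 520))) (Nd (Nd (Lf 572) (Lf 640)) (Nd (Lf 621) (Lf 666)))) (Nd (Nd (Nd (Lf 1) (Lf 0)) (Nd (Lf 184) (Lf 662))) (Nd (Nd (Lf 680) (Lf 102)) (Nd (Lf 102) (Lf 115))))))) (Nd (Nd (Nd (Nd (Nd (Nd (Lf 724) (Lf 208)) (Nd (Lf 537) (Lf 154))) (Nd (Nd (Lf 125) (Lf 37)) (Nd (Lf 102) (Lf 540)))) (Nd (Nd (Nd (Lf 627) (Lf 733)) (Nd (Lf 115) (Lf 735))) (Nd (Nd (Lf 0) (Lf 1)) (Nd (Lf 572) (Lf 47))))) (Nd (Nd (Nd (Nd (Lf 600) (Lf 154)) (Nd (Lf 208) (Lf 115))) (Nd (Nd (Lf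 600) (Lf 733)) (Nd (Lf 621) (Lf 735)))) (Nd (Nd (Nd (Lf 0) (Lf 1)) (Nd (Lf 1) (Lf 0))) (Nd (Nd (Lf 724) (Lf 125)) (Nd (Lf 154) (Lf 102)))))) (Nd (Nd (Nd (Nd (Nd (Lf 0) (Lf 1)) (Nd (Lf 208) (Lf 47))) (Nd (Nd (Lf 208) (Lf 621)) (Nd (Lf 724) (Lf 572)))) (Nd (Nd (Nd (Lf 733) (Lf 37)) (Nd (Lf 735) (Lf 537))) (Nd (Nd (Lf 76) (Lf 735)) (Nd (Lf 540) (Lf 733))))) (Nd (Nd (Nd (Nd (Lf 733) (Lf 708)) (Nd (Lf 735) (Lf 184))) (Nd (Nd (Lf 47) (Lf 76)) (Nd (Lf 708) (Lf 47)))) (Nd (Nd (Nd (Lf 65) (Lf 724)) (Nd (Lf 520) (Lf 627))) (Nd (Nd (Lf 184) (Lf 37)) (Nd (Lf 37) (Lf 627)))))))) (Nd (Nd (Nd (Nd (Nd (Nd (Nd (Lf 520) (Lf 184)) (Nd (Lf 0) (Lf 1))) (Nd (Nd (Lf 735) (Lf 65)) (Nd (Lf 733) (Lf 76)))) (Nd (Nd (Nd (Lf 76) (Lf 572)) (Nd (Lf 65) (Lf 208))) (Nd (Nd (Lf 640) (Lf 537)) (Nd (Lf 572) (Lf 724))))) (Nd (Nd (Nd (Nd (Lf 1) (Lf 0)) (Nd (Lf 666) (Lf 680))) (Nd (Nd (Lf 540) (Lf 76)) (Nd (Lf 666) (Lf 37)))) (Nd (Nd (Nd (Lf 65) (Lf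 572)) (Nd (Lf 662) (Lf 47))) (Nd (Nd (Lf 208) (Lf 47)) (Nd (Lf 662) (Lf 708)))))) (Nd (Nd (Nd (Nd (Nd (Lf 680) (Lf 666)) (Nd (Lf 102) (Lf 154))) (Nd (Nd (Lf 125) (Lf 520)) (Nd (Lf 724) (Lf 37)))) (Nd (Nd (Nd (Lf 572) (Lf 540)) (Nd (Lf 115) (Lf 537))) (Nd (Nd (Lf 537) (Lf 47)) (Nd (Lf 540) (Lf 733))))) (Nd (Nd (Nd (Nd (Lf 208) (Lf 540)) (Nd (Lf 0) (Lf 1))) (Nd (Nd (Lf 0) (Lf 1)) (Nd (Lf 125) (Lf 115)))) (Nd (Nd (Nd (Lf 115) (Lf 125)) (Nd (Lf 154) (Lf 640))) (Nd (Nd (Lf 537) (Lf 520)) (Nd (Lf 47) (Lf 102))))))) (Nd (Nd (Nd (Nd (Nd (Nd (Lf 621) (Lf 115)) (Nd (Lf 154) (Lf 65))) (Nd (Nd (Lf 0) (Lf 1)) (Nd (Lf 627) (Lf 115)))) (Nd (Nd (Nd (Lf 621) (Lf 125)) (Nd (Lf 1) (Lf 0))) (Nd (Nd (Lf 600) (Lf 662)) (Nd (Lf 76) (Lf 125))))) (Nd (Nd (Nd (Nd (Lf 65) (Lf 733)) (Nd (Lf 102) (Lf 735))) (Nd (Nd (Lf 102) (Lf 733)) (Nd (Lf 154) (Lf 735)))) (Nd (Nd (Nd (Lf 1) (Lf 0)) (Nd (Lf 680) (Lf 640))) (Nd (Nd (Lf 724) (Lf 76)) (Nd (Lf 627) (Lf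 621)))))) (Nd (Nd (Nd (Nd (Nd (Lf 184) (Lf 37)) (Nd (Lf 115) (Lf 184))) (Nd (Nd (Lf 47) (Lf 621)) (Nd (Lf 733) (Lf 627)))) (Nd (Nd (Nd (Lf 666) (Lf 208)) (Nd (Lf 600) (Lf 47))) (Nd (Nd (Lf 125) (Lf 600)) (Nd (Lf 37) (Lf 724))))) (Nd (Nd (Nd (Nd (Lf 208) (Lf 115)) (Nd (Lf 640) (Lf 65))) (Nd (Nd (Lf 184) (Lf 65)) (Nd (Lf 47) (Lf 102)))) (Nd (Nd (Nd (Lf 76) (Lf 621)) (Nd (Lf 154) (Lf 627))) (Nd (Nd (Lf 37) (Lf 600)) (Nd (Lf 76) (Lf 125)))))))))) (Nd (Nd (Nd (Nd (Nd (Nd (Nd (Nd (Nd (Lf 115) (Lf 436)) (Nd (Lf 313) (Lf 344))) (Nd (Nd (Lf 208) (Lf 401)) (Nd (Lf 436) (Lf 434)))) (Nd (Nd (Nd (Lf 0) (Lf 1)) (Nd (Lf 386) (Lf 102))) (Nd (Nd (Lf 154) (Lf 208)) (Nd (Lf 125) (Lf 208))))) (Nd (Nd (Nd (Nd (Lf 125) (Lf 436)) (Nd (Lf 352) (Lf 47))) (Nd (Nd (Lf 76) (Lf 102)) (Nd (Lf 386) (Lf 332)))) (Nd (Nd (Nd (Lf 1) (Lf 0)) (Nd (Lf 154) (Lf 288))) (Nd (Nd (Lf 0) (Lf 1)) (Nd (Lf 115) (Lf 434)))))) (Nd (Nd (Nd (Nd (Nd (Lf 436) (Lf 76)) (Nd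 (Lf 184) (Lf 401))) (Nd (Nd (Lf 401) (Lf 125)) (Nd (Lf 434) (Lf 47)))) (Nd (Nd (Nd (Lf 288) (Lf 347)) (Nd (Lf 344) (Lf 115))) (Nd (Nd (Lf 65) (Lf 37)) (Nd (Lf 184) (Lf 386))))) (Nd (Nd (Nd (Nd (Lf 386) (Lf 313)) (Nd (Lf 65) (Lf 47))) (Nd (Nd (Lf 401) (Lf 313)) (Nd (Lf 47) (Lf 386)))) (Nd (Nd (Nd (Lf 184) (Lf 37)) (Nd (Lf 434) (Lf 352))) (Nd (Nd (Lf 0) (Lf 1)) (Nd (Lf 102) (Lf 76))))))) (Nd (Nd (Nd (Nd (Nd (Nd (Lf 332) (Lf 125)) (Nd (Lf 47) (Lf 459))) (Nd (Nd (Lf 76) (Lf 154)) (Nd (Lf 208) (Lf 154)))) (Nd (Nd (Nd (Lf 37) (Lf 65)) (Nd (Lf 208) (Lf 313))) (Nd (Nd (Lf 452) (Lf 473)) (Nd (Lf 154) (Lf 115))))) (Nd (Nd (Nd (Nd (Lf 76) (Lf 473)) (Nd (Lf 288) (Lf 347))) (Nd (Nd (Lf 344) (Lf 76)) (Nd (Lf 37) (Lf 347)))) (Nd (Nd (Nd (Lf 0) (Lf 1)) (Nd (Lf 102) (Lf 352))) (Nd (Nd (Lf 47) (Lf 65)) (Nd (Lf 154) (Lf 459)))))) (Nd (Nd (Nd (Nd (Nd (Lf 347) (Lf 125)) (Nd (Lf 313) (Lf 344))) (Nd (Nd (Lf 125) (Lf 184)) (Nd (Lf 459) (Lf 184))))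 (Nd (Nd (Nd (Lf 352) (Lf 452)) (Nd (Lf 115) (Lf 473))) (Nd (Nd (Lf 1) (Lf 0)) (Nd (Lf 102) (Lf 115))))) (Nd (Nd (Nd (Nd (Lf 76) (Lf 452)) (Nd (Lf 1) (Lf 0))) (Nd (Nd (Lf 473) (Lf 125)) (Nd (Lf 452) (Lf 47)))) (Nd (Nd (Nd (Lf 208) (Lf 459)) (Nd (Lf 102) (Lf 115))) (Nd (Nd (Lf 184) (Lf 37)) (Nd (Lf 459) (Lf 102)))))))) (Nd (Nd (Nd (Nd (Nd (Nd (Nd (Lf 0) (Lf 1)) (Nd (Lf 473) (Lf 154))) (Nd (Nd (Lf 184) (Lf 65)) (Nd (Lf 154) (Lf 47)))) (Nd (Nd (Nd (Lf 76) (Lf 434)) (Nd (Lf 386) (Lf 313))) (Nd (Nd (Lf 313) (Lf 37)) (Nd (Lf 386) (Lf 436))))) (Nd (Nd (Nd (Nd (Lf 459) (Lf 76)) (Nd (Lf 154) (Lf 76))) (Nd (Nd (Lf 313) (Lf 65)) (Nd (Lf 0) (Lf 1)))) (Nd (Nd (Nd (Lf 76) (Lf 401)) (Nd (Lf 0) (Lf 1))) (Nd (Nd (Lf 65) (Lf 401)) (Nd (Lf 65) (Lf 452)))))) (Nd (Nd (Nd (Nd (Nd (Lf 125) (Lf 184)) (Nd (Lf 102) (Lf 208))) (Nd (Nd (Lf 184) (Lf 37)) (Nd (Lf 154) (Lf 115)))) (Nd (Nd (Nd (Lf 0) (Lf 1)) (Nd (Lf 401) (Lf 473))) (Nd (Nd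 (Lf 115) (Lf 313)) (Nd (Lf 115) (Lf 47))))) (Nd (Nd (Nd (Nd (Lf 184) (Lf 313)) (Nd (Lf 102) (Lf 37))) (Nd (Nd (Lf 288) (Lf 47)) (Nd (Lf 452) (Lf 115)))) (Nd (Nd (Nd (Lf 436) (Lf 47)) (Nd (Lf 434) (Lf 102))) (Nd (Nd (Lf 436) (Lf 208)) (Nd (Lf 434) (Lf 37))))))) (Nd (Nd (Nd (Nd (Nd (Nd (Lf 434) (Lf 65)) (Nd (Lf 154) (Lf 459))) (Nd (Nd (Lf 0) (Lf 1)) (Nd (Lf 436) (Lf 459)))) (Nd (Nd (Nd (Lf 452) (Lf 208)) (Nd (Lf 401) (Lf 184))) (Nd (Nd (Lf 76) (Lf 352)) (Nd (Lf 102) (Lf 347))))) (Nd (Nd (Nd (Nd (Lf 344) (Lf 473)) (Nd (Lf 352) (Lf 347))) (Nd (Nd (Lf 0) (Lf 1)) (Nd (Lf 76) (Lf 65)))) (Nd (Nd (Nd (Lf 208) (Lf 386)) (Nd (Lf 76) (Lf 65))) (Nd (Nd (Lf 1) (Lf 0)) (Nd (Lf 1) (Lf 0)))))) (Nd (Nd (Nd (Nd (Nd (Lf 184) (Lf 37)) (Nd (Lf 473) (Lf 401))) (Nd (Nd (Lf 76) (Lf 115)) (Nd (Lf 102) (Lf 125)))) (Nd (Nd (Nd (Lf 352) (Lf 65)) (Nd (Lf 344) (Lf 47))) (Nd (Nd (Lf 208) (Lf 344)) (Nd (Lf 347) (Lf 436))))) (Nd (Nd (Nd (Nd (Lf 47)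 (Lf 37)) (Nd (Lf 47) (Lf 115))) (Nd (Nd (Lf 352) (Lf 344)) (Nd (Lf 347) (Lf 154)))) (Nd (Nd (Nd (Lf 37) (Lf 332)) (Nd (Lf 37) (Lf 47))) (Nd (Nd (Lf 102) (Lf 125)) (Nd (Lf 332) (Lf 452))))))))) (Nd (Nd (Nd (Nd (Nd (Nd (Nd (Nd (Lf 344) (Lf 115)) (Nd (Lf 386) (Lf 347))) (Nd (Nd (Lf 473) (Lf 313)) (Nd (Lf 473) (Lf 401)))) (Nd (Nd (Nd (Lf 0) (Lf 1)) (Nd (Lf 184) (Lf 401))) (Nd (Nd (Lf 0) (Lf 1)) (Nd (Lf 154) (Lf 125))))) (Nd (Nd (Nd (Nd (Lf 452) (Lf 401)) (Nd (Lf 154) (Lf 352))) (Nd (Nd (Lf 47) (Lf 184)) (Nd (Lf 459) (Lf 76)))) (Nd (Nd (Nd (Lf 386) (Lf 452)) (Nd (Lf 65) (Lf 452))) (Nd (Nd (Lf 288) (Lf 184)) (Nd (Lf 37) (Lf 459)))))) (Nd (Nd (Nd (Nd (Nd (Lf 313) (Lf 332)) (Nd (Lf 436) (Lf 47))) (Nd (Nd (Lf 434) (Lf 313)) (Nd (Lf 125) (Lf 47)))) (Nd (Nd (Nd (Lf 115) (Lf 37)) (Nd (Lf 386) (Lf 344))) (Nd (Nd (Lf 184) (Lf 37)) (Nd (Lf 436) (Lf 154))))) (Nd (Nd (Nd (Nd (Lf 184) (Lf 313)) (Nd (Lf 434) (Lf 65))) (Nd (Nd (Lf 436) (Lf 344))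 (Nd (Lf 347) (Lf 154)))) (Nd (Nd (Nd (Lf 352) (Lf 288)) (Nd (Lf 1) (Lf 0))) (Nd (Nd (Lf 288) (Lf 102)) (Nd (Lf 76) (Lf 154))))))) (Nd (Nd (Nd (Nd (Nd (Nd (Lf 76) (Lf 344)) (Nd (Lf 347) (Lf 473))) (Nd (Nd (Lf 76) (Lf 401)) (Nd (Lf 125) (Lf 347)))) (Nd (Nd (Nd (Lf 115) (Lf 65)) (Nd (Lf 313) (Lf 459))) (Nd (Nd (Lf 401) (Lf 65)) (Nd (Lf 401) (Lf 473))))) (Nd (Nd (Nd (Nd (Lf 332) (Lf 459)) (Nd (Lf 452) (Lf 288))) (Nd (Nd (Lf 313) (Lf 332)) (Nd (Lf 386) (Lf 37)))) (Nd (Nd (Nd (Lf 208) (Lf 473)) (Nd (Lf 1) (Lf 0))) (Nd (Nd (Lf 352) (Lf 47)) (Nd (Lf 452) (Lf 386)))))) (Nd (Nd (Nd (Nd (Nd (Lf 436) (Lf 313)) (Nd (Lf 208) (Lf 459))) (Nd (Nd (Lf 344) (Lf 208)) (Nd (Lf 434) (Lf 347)))) (Nd (Nd (Nd (Lf 352) (Lf 436)) (Nd (Lf 102) (Lf 436))) (Nd (Nd (Lf 452) (Lf 434)) (Nd (Lf 102) (Lf 434))))) (Nd (Nd (Nd (Nd (Lf 332) (Lf 125)) (Nd (Lf 0) (Lf 1))) (Nd (Nd (Lf 47) (Lf 125)) (Nd (Lf 434) (Lf 76)))) (Nd (Nd (Nd (Lf 288) (Lf 352)) (Nd (Lf 65)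 (Lf 115))) (Nd (Nd (Lf 352) (Lf 208)) (Nd (Lf 37) (Lf 115)))))))) (Nd (Nd (Nd (Nd (Nd (Nd (Nd (Lf 37) (Lf 473)) (Nd (Lf 47) (Lf 184))) (Nd (Nd (Lf 347) (Lf 344)) (Nd (Lf 347) (Lf 344)))) (Nd (Nd (Nd (Lf 0) (Lf 1)) (Nd (Lf 47) (Lf 208))) (Nd (Nd (Lf 344) (Lf 401)) (Nd (Lf 434) (Lf 347))))) (Nd (Nd (Nd (Nd (Lf 37) (Lf 313)) (Nd (Lf 154) (Lf 332))) (Nd (Nd (Lf 0) (Lf 1)) (Nd (Lf 154) (Lf 37)))) (Nd (Nd (Nd (Lf 332) (Lf 401)) (Nd (Lf 47) (Lf 386))) (Nd (Nd (Lf 344) (Lf 47)) (Nd (Lf 386) (Lf 347)))))) (Nd (Nd (Nd (Nd (Nd (Lf 288) (Lf 154)) (Nd (Lf 208) (Lf 313))) (Nd (Nd (Lf 1) (Lf 0)) (Nd (Lf 459) (Lf 47)))) (Nd (Nd (Nd (Lf 436) (Lf 452)) (Nd (Lf 473) (Lf 434))) (Nd (Nd (Lf 1) (Lf 0)) (Nd (Lf 434) (Lf 313))))) (Nd (Nd (Nd (Nd (Lf 184) (Lf 37)) (Nd (Lf 0) (Lf 1))) (Nd (Nd (Lf 1) (Lf 0)) (Nd (Lf 288) (Lf 452)))) (Nd (Nd (Nd (Lf 459) (Lf 313)) (Nd (Lf 288) (Lf 47))) (Nd (Nd (Lf 436) (Lf 352)) (Nd (Lf 386) (Lf 352)))))))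 (Nd (Nd (Nd (Nd (Nd (Nd (Lf 473) (Lf 115)) (Nd (Lf 344) (Lf 102))) (Nd (Nd (Lf 76) (Lf 473)) (Nd (Lf 115) (Lf 436)))) (Nd (Nd (Nd (Lf 125) (Lf 65)) (Nd (Lf 184) (Lf 102))) (Nd (Nd (Lf 332) (Lf 347)) (Nd (Lf 344) (Lf 125))))) (Nd (Nd (Nd (Nd (Lf 125) (Lf 473)) (Nd (Lf 459) (Lf 102))) (Nd (Nd (Lf 102) (Lf 65)) (Nd (Lf 115) (Lf 459)))) (Nd (Nd (Nd (Lf 76) (Lf 436)) (Nd (Lf 332) (Lf 347))) (Nd (Nd (Lf 208) (Lf 452)) (Nd (Lf 115) (Lf 434)))))) (Nd (Nd (Nd (Nd (Nd (Lf 352) (Lf 76)) (Nd (Lf 401) (Lf 184))) (Nd (Nd (Lf 65) (Lf 473)) (Nd (Lf 313) (Lf 115)))) (Nd (Nd (Nd (Lf 154) (Lf 76)) (Nd (Lf 434) (Lf 208))) (Nd (Nd (Lf 65) (Lf 313)) (Nd (Lf 102) (Lf 386))))) (Nd (Nd (Nd (Nd (Lf 344) (Lf 386)) (Nd (Lf 102) (Lf 65))) (Nd (Nd (Lf 65) (Lf 125)) (Nd (Lf 352) (Lf 459)))) (Nd (Nd (Nd (Lf 452) (Lf 76)) (Nd (Lf 352) (Lf 115))) (Nd (Nd (Lf 401) (Lf 288)) (Nd (Lf 76) (Lf 288)))))))))))"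

lemma memL: "mem 1 baseT" "mem 37 baseT" "mem 47 baseT" "mem 65 baseT" "mem 76 baseT" "mem 102 baseT" "mem 115 baseT" "mem 125 baseT" "mem 154 baseT" "mem 184 baseT" "mem 208 baseT" "mem 288 baseT" "mem 313 baseT" "mem 332 baseT" "mem 344 baseT" "mem 347 baseT" "mem 352 baseT" "mem 386 baseT" "mem 401 baseT" "mem 434 baseT" "mem 436 baseT" "mem 452 baseT" "mem 459 baseT" "mem 473 baseT" "mem 520 baseT" "mem 537 baseT" "mem 540 baseT" "mem 572 baseT" "mem 600 baseT" "mem 621 baseT" "mem 627 baseT" "mem 640 baseT" "mem 662 baseT" "mem 666 baseT" "mem 680 baseT" "mem 708 baseT" "mem 724 baseT" "mem 733 baseT" "mem 735 baseT" "mem 776 baseT" "mem 780 baseT" "mem 827 baseT" "mem 859 baseT" "mem 882 baseT" "mem 904 baseT" "mem 916 baseT" "mem 933 baseT" "mem 941 baseT" "mem 946 baseT" "mem 949 baseT"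
  by (simp_all add: baseT_def)

lemma base_chk: "chk baseT (pw 10) 0 witT"
  unfolding pw10 witT_def by (simp add: memL okm_def del: One_nat_def add_2_eq_Suc add_2_eq_Suc')

lemma bit_lt:
  fixes m :: nat
  assumes "m < 2 ^ n" "bit m i"
  shows "i < n"
proof (rule ccontr)
  assume "\<not> i < n"
  then have "(2::nat) ^ n \<le> 2 ^ i" by simp
  then have "m < 2 ^ i" using assms(1) by linarith
  then have "m div 2 ^ i = 0" by simp
  then show False using assms(2) by (simp add: bit_iff_odd)
qed

definition vn :: "nat \<Rightarrow> (nat \<Rightarrow> bool)" where "vn m = (\<lambda>i. bit m i)"

lemma vn_xor: "vn (xor a b) = xorv (vn a) (vn b)"
  by (auto simp: vn_def xorv_def bit_xor_iff)

lemma vn_zero: "vn 0 = zv" by (simp add: vn_def zv_def)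

lemma vn_inj: "vn a = vn b \<Longrightarrow> a = b"
  by (simp add: vn_def bit_eq_iff fun_eq_iff)

lemma vn_bvecs: "m < 2 ^ n \<Longrightarrow> vn m \<in> bvecs n"
proof -
  assume m: "m < 2 ^ n"
  have "\<not> bit m i" if "n \<le> i" for i using bit_lt[OF m, of i] that by auto
  then show ?thesis by (auto simp: vn_def bvecs_def)
qed

lemma bvecs_vn: "s \<in> bvecs n \<Longrightarrow> \<exists>m < 2 ^ n. s = vn m"
proof -
  assume s: "s \<in> bvecs n"
  define m :: nat where "m = horner_sum of_bool 2 (map s [0..<n])"
  have "m < 2 ^ n" using horner_sum_of_bool_2_less[of "map s [0..<n]"] by (simp add: m_def)
  moreover have "s = vn m"
  proof
    fix i show "s i = vn m i"
    proof (cases "i < n")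
      case True then show ?thesis by (simp add: vn_def m_def bit_horner_sum_bit_iff possible_bit_def)
    next
      case False then show ?thesis using s by (simp add: vn_def m_def bit_horner_sum_bit_iff bvecs_def)
    qed
  qed
  ultimately show ?thesis by blast
qed

definition baseB :: "nat set" where "baseB = setbt baseT"
definition baseL :: "nat list" where "baseL = inord baseT"

lemma baseL_set: "set baseL = baseB" by (simp add: baseL_def baseB_def set_inord)

lemma baseL_facts: "distinct baseL \<and> length baseL = 50 \<and> list_all (\<lambda>a. 0 < a \<and> a < 1024) baseL"
  unfolding baseL_def baseT_def by code_simp

lemma base_cover: "m < 2 ^ 10 \<Longrightarrow> m = 0 \<or> m \<in> baseB \<or> (\<exists>a\<in>baseB. xor a m \<in> baseB)"
proof -
  assume "m < 2 ^ 10"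
  then obtain a where "okm baseT (0 + m) a" using chk_sound[OF base_chk, of m] by blast
  then have o: "m = 0 \<or> (if a = 0 then mem m baseT else mem a baseT \<and> mem (xor a m) baseT)"
    by (simp add: okm_def)
  show ?thesis
  proof (cases "a = 0")
    case True then show ?thesis using o mem_sound[of m baseT] by (auto simp: baseB_def)
  next
    case False
    then have "m = 0 \<or> (mem a baseT \<and> mem (xor a m) baseT)" using o by simp
    then show ?thesis using mem_sound[of a baseT] mem_sound[of "xor a m" baseT]
      by (auto simp: baseB_def)
  qed
qed

lemma baseB_range: "a \<in> baseB \<Longrightarrow> 0 < a \<and> a < 1024"
  using baseL_facts baseL_set by (auto simp: list_all_iff)

lemma card_baseB: "card baseB = 50"
  using baseL_facts baseL_set distinct_card by metis

definition pos :: "nat \<Rightarrow> nat" where "pos a = (LEAST i. i < length baseL \<and> baseL ! i = a)"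

lemma pos: "a \<in> baseB \<Longrightarrow> pos a < 50 \<and> baseL ! pos a = a"
proof -
  assume "a \<in> baseB"
  then have "\<exists>i. i < length baseL \<and> baseL ! i = a" using baseL_set by (metis in_set_conv_nth)
  then have "pos a < length baseL \<and> baseL ! pos a = a" unfolding pos_def by (rule LeastI_ex)
  then show ?thesis using baseL_facts by simp
qed

definition bitpoly :: "nat \<Rightarrow> bit poly" where
  "bitpoly i = Poly (map (\<lambda>j. of_bool (bit i j)) [0..<6])"

definition col :: "nat \<Rightarrow> bit poly" where "col a = bitpoly (pos a)"

lemma of_bool_bit_eq: "(of_bool b :: bit) = of_bool c \<longleftrightarrow> b = c"
  by (cases b; cases c) auto

lemma coeff_bitpoly: "coeff (bitpoly i) j = (if j < 6 then of_bool (bit i j) else 0)"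
  by (simp add: bitpoly_def nth_default_def)

lemma degree_lt_iff: "0 < k \<Longrightarrow> (\<forall>j\<ge>k. coeff x j = 0) \<Longrightarrow> degree x < k"
  by (metis Suc_pred degree_le le_imp_less_Suc less_eq_Suc_le)

lemma degree_bitpoly: "degree (bitpoly i) < 6"
  by (rule degree_lt_iff) (simp_all add: coeff_bitpoly)

lemma col_inj: "a \<in> baseB \<Longrightarrow> b \<in> baseB \<Longrightarrow> col a = col b \<Longrightarrow> a = b"
proof -
  assume a: "a \<in> baseB" and b: "b \<in> baseB" and e: "col a = col b"
  have pa: "pos a < 2 ^ 6" and pb: "pos b < 2 ^ 6" using pos[OF a] pos[OF b] by auto
  have "bit (pos a) j = bit (pos b) j" for j
  proof (cases "j < 6")
    case True
    have "coeff (col a) j = coeff (col b) j" using e by simp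
    then show ?thesis using True by (simp add: col_def coeff_bitpoly of_bool_bit_eq)
  next
    case False
    then show ?thesis using bit_lt[OF pa, of j] bit_lt[OF pb, of j] by auto
  qed
  then have "pos a = pos b" by (simp add: bit_eq_iff)
  then show "a = b" using pos[OF a] pos[OF b] by metis
qed

lemma degree_col: "degree (col a) < 6" by (simp add: col_def degree_bitpoly)

definition Fk :: "nat \<Rightarrow> bit poly set" where "Fk k = {x. degree x < k}"

definition emb :: "nat \<Rightarrow> (nat \<Rightarrow> bool) \<Rightarrow> bit poly \<Rightarrow> bit poly \<Rightarrow> (nat \<Rightarrow> bool)" where
  "emb k h x y = (\<lambda>i. if i < 10 then h i else if i < 10 + k then coeff x (i - 10) = 1
      else if i < 10 + 2 * k then coeff y (i - 10 - k) = 1 else False)"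

lemma bit_xor_one: "((a::bit) = 1) \<noteq> (b = 1) \<longleftrightarrow> a + b = 1"
  using bit_cases2[of a] bit_cases2[of b] by auto

lemma emb_bv: "h \<in> bvecs 10 \<Longrightarrow> emb k h x y \<in> bvecs (10 + 2 * k)"
  by (auto simp: emb_def bvecs_def)

lemma emb_xor: "xorv (emb k h x y) (emb k h' x' y') = emb k (xorv h h') (x + x') (y + y')"
  by (auto simp: emb_def xorv_def fun_eq_iff bit_xor_one[symmetric])

lemma emb_zero: "emb k zv 0 0 = zv"
  by (auto simp: emb_def zv_def fun_eq_iff)

lemma bit_eq_from_one: "((a::bit) = 1) = (b = 1) \<Longrightarrow> a = b"
  using bit_cases2[of a] bit_cases2[of b] by auto

lemma emb_inj:
  assumes "h \<in> bvecs 10" "h' \<in> bvecs 10" "x \<in> Fk k" "x' \<in> Fk k" "y \<in> Fk k" "y' \<in> Fk k"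
    and e: "emb k h x y = emb k h' x' y'"
  shows "h = h' \<and> x = x' \<and> y = y'"
proof (intro conjI)
  show "h = h'"
  proof
    fix i show "h i = h' i"
    proof (cases "i < 10")
      case True then show ?thesis using fun_cong[OF e, of i] by (simp add: emb_def)
    next
      case False then show ?thesis using assms(1,2) by (simp add: bvecs_def)
    qed
  qed
  show "x = x'"
  proof (rule poly_eqI)
    fix j show "coeff x j = coeff x' j"
    proof (cases "j < k")
      case True
      then have "(coeff x j = 1) = (coeff x' j = 1)" using fun_cong[OF e, of "10 + j"] by (simp add: emb_def)
      then show ?thesis by (rule bit_eq_from_one)
    next
      case False then show ?thesis using assms(3,4) by (simp add: Fk_def coeff_eq_0)
    qed
  qed
  show "y = y'"
  proof (rule poly_eqI)
    fix j show "coeff y j = coeff y' j"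
    proof (cases "j < k")
      case True
      then have "(coeff y j = 1) = (coeff y' j = 1)" using fun_cong[OF e, of "10 + k + j"] by (simp add: emb_def)
      then show ?thesis by (rule bit_eq_from_one)
    next
      case False then show ?thesis using assms(5,6) by (simp add: Fk_def coeff_eq_0)
    qed
  qed
qed

definition bpoly :: "nat \<Rightarrow> (nat \<Rightarrow> bool) \<Rightarrow> bit poly" where
  "bpoly k v = Poly (map (\<lambda>j. of_bool (v j)) [0..<k])"

lemma coeff_bpoly: "coeff (bpoly k v) j = (if j < k then of_bool (v j) else 0)"
  by (simp add: bpoly_def nth_default_def)

lemma bpoly_Fk: "0 < k \<Longrightarrow> bpoly k v \<in> Fk k"
  unfolding Fk_def using degree_lt_iff[of k "bpoly k v"] by (simp add: coeff_bpoly)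

lemma of_bool_one: "((of_bool b :: bit) = 1) = b" by (cases b) auto

lemma emb_surj:
  assumes k: "0 < k" and s: "s \<in> bvecs (10 + 2 * k)"
  shows "\<exists>h x y. h \<in> bvecs 10 \<and> x \<in> Fk k \<and> y \<in> Fk k \<and> s = emb k h x y"
proof (intro exI conjI)
  let ?h = "\<lambda>i. i < 10 \<and> s i"
  let ?x = "bpoly k (\<lambda>j. s (10 + j))"
  let ?y = "bpoly k (\<lambda>j. s (10 + k + j))"
  show "?h \<in> bvecs 10" by (simp add: bvecs_def)
  show "?x \<in> Fk k" "?y \<in> Fk k" using bpoly_Fk[OF k] by auto
  show "s = emb k ?h ?x ?y"
  proof
    fix i show "s i = emb k ?h ?x ?y i"
      using s by (auto simp: emb_def coeff_bpoly of_bool_one bvecs_def)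
  qed
qed

lemma card_Fk: "0 < k \<Longrightarrow> finite (Fk k) \<and> card (Fk k) = 2 ^ k"
proof -
  assume k: "0 < k"
  have b: "bij_betw (\<lambda>x j. j < k \<and> coeff x j = 1) (Fk k) (bvecs k)"
  proof (rule bij_betw_byWitness[where f' = "bpoly k"])
    show "\<forall>a\<in>Fk k. bpoly k (\<lambda>j. j < k \<and> coeff a j = 1) = a"
    proof
      fix a assume a: "a \<in> Fk k"
      show "bpoly k (\<lambda>j. j < k \<and> coeff a j = 1) = a"
      proof (rule poly_eqI)
        fix j show "coeff (bpoly k (\<lambda>j. j < k \<and> coeff a j = 1)) j = coeff a j"
          using a bit_cases2[of "coeff a j"] by (auto simp: coeff_bpoly Fk_def coeff_eq_0)
      qed
    qed
    show "\<forall>a'\<in>bvecs k. (\<lambda>j. j < k \<and> coeff (bpoly k a') j = 1) = a'"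
      by (auto simp: coeff_bpoly of_bool_one bvecs_def fun_eq_iff)
    show "(\<lambda>x j. j < k \<and> coeff x j = 1) ` Fk k \<subseteq> bvecs k" by (auto simp: bvecs_def)
    show "bpoly k ` bvecs k \<subseteq> Fk k" using bpoly_Fk[OF k] by auto
  qed
  show ?thesis using bij_betw_finite[OF b] bij_betw_same_card[OF b] bvecs_finite_card[of k] by simp
qed

lemma padd_cancel1: "(a::bit poly) + (a + b) = b"
  by (metis add.assoc add_0 poly_add_self)

lemma padd_cancel2: "((b::bit poly) + a) + a = b"
  by (metis add.assoc add_0_right poly_add_self)

lemma padd_eq0: "(a::bit poly) + b = 0 \<Longrightarrow> a = b"
  by (metis padd_cancel1 add_0_right)

lemma Fk_add: "x \<in> Fk k \<Longrightarrow> y \<in> Fk k \<Longrightarrow> x + y \<in> Fk k"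
  unfolding Fk_def using degree_add_le_max[of x y] by auto

lemma Fk_mod: "0 < k \<Longrightarrow> degree p = k \<Longrightarrow> x mod p \<in> Fk k"
  unfolding Fk_def using degree_mod_less[of p x] by fastforce

lemma Fk_modid: "degree p = k \<Longrightarrow> x \<in> Fk k \<Longrightarrow> x mod p = x"
  unfolding Fk_def by (intro mod_poly_less) simp

lemma mod_lift: "(a::bit poly) mod c = b mod c \<Longrightarrow> (a + y) mod c = (b + y) mod c"
  by (metis mod_add_left_eq)

lemma arith1: "1 \<le> (t::nat) \<Longrightarrow> 50 * t + 3 * (t - 1) = 53 * t - 3"
  by (cases t) auto

lemma arith2: "1 \<le> (t::nat) \<Longrightarrow> 53 * t - 3 + 1 \<le> 53 * t"
  by (cases t) auto

lemma arith3: "1 \<le> (t::nat) \<Longrightarrow> 53 * t - 3 + 1 < 1024 * (t * t)"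
proof -
  assume t: "1 \<le> t"
  have "53 * t - 3 + 1 \<le> 53 * t" using arith2[OF t] .
  also have "\<dots> < 1024 * t" using t by simp
  also have "\<dots> = 1024 * t * 1" by simp
  also have "\<dots> \<le> 1024 * t * t" using t by (intro mult_left_mono) simp_all
  finally show ?thesis by (simp add: mult.assoc)
qed

lemma construction:
  fixes p :: "bit poly" and k :: nat
  assumes nf: "\<forall>f. 1 \<le> degree f \<and> degree f \<le> 4 \<longrightarrow> \<not> f dvd p"
    and dp: "degree p = k" and k6: "6 \<le> k" and k8: "k \<le> 8"
  shows "\<exists>H. is_pc_matrix (53 * 2 ^ k - 3) (10 + 2 * k) H
             \<and> min_dist (53 * 2 ^ k - 3) (10 + 2 * k) H = 3
             \<and> covering_radius (53 * 2 ^ k - 3) (10 + 2 * k) H = 2"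
proof -
  have k0: "0 < k" using k6 by simp
  have finF: "finite (Fk k)" and cardF: "card (Fk k) = 2 ^ k" using card_Fk[OF k0] by auto
  have colF: "col a \<in> Fk k" for a using degree_col[of a] k6 by (simp add: Fk_def)
  have zF: "0 \<in> Fk k" "1 \<in> Fk k" using k0 by (auto simp: Fk_def)
  have vnB: "a \<in> baseB \<Longrightarrow> vn a \<in> bvecs 10" for a using baseB_range[of a] vn_bvecs[of a 10] by simp
  have vnz: "vn a \<noteq> zv" if aB: "a \<in> baseB" for a
  proof
    assume "vn a = zv"
    then have "vn a = vn 0" using vn_zero by simp
    then have "a = 0" by (rule vn_inj)
    then show False using baseB_range[OF aB] by simp
  qed
  have zvB: "zv \<in> bvecs 10" by (simp add: zv_def bvecs_def)
  define f1 where "f1 = (\<lambda>(a, x). emb k (vn a) x ((col a * x) mod p))"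
  define C1 where "C1 = f1 ` (baseB \<times> Fk k)"
  define C2 where "C2 = (\<lambda>x. emb k zv x 0) ` (Fk k - {0})"
  define C3 where "C3 = (\<lambda>y. emb k zv 0 y) ` (Fk k - {0})"
  define C4 where "C4 = (\<lambda>x. emb k zv x x) ` (Fk k - {0})"
  define C where "C = C1 \<union> C2 \<union> C3 \<union> C4"
  have modF: "x mod p \<in> Fk k" for x using Fk_mod[OF k0 dp] .
  have inC1: "emb k (vn a) x ((col a * x) mod p) \<in> C1" if "a \<in> baseB" "x \<in> Fk k" for a x
    using that unfolding C1_def f1_def by force
  have sep: "emb k h x y \<noteq> emb k h' x' y'"
    if "h \<in> bvecs 10" "h' \<in> bvecs 10" "x \<in> Fk k" "x' \<in> Fk k" "y \<in> Fk k" "y' \<in> Fk k"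
       "h \<noteq> h' \<or> x \<noteq> x' \<or> y \<noteq> y'" for h h' x x' y y'
  proof
    assume "emb k h x y = emb k h' x' y'"
    then have "h = h' \<and> x = x' \<and> y = y'" by (rule emb_inj[OF that(1-6)])
    then show False using that(7) by blast
  qed
  have finB: "finite baseB" using card_baseB card.infinite by fastforce
  have inj1: "inj_on f1 (baseB \<times> Fk k)"
  proof (rule inj_onI, clarify)
    fix a x a' x' assume A: "a \<in> baseB" "x \<in> Fk k" "a' \<in> baseB" "x' \<in> Fk k"
      and e: "f1 (a, x) = f1 (a', x')"
    have "vn a = vn a' \<and> x = x' \<and> (col a * x) mod p = (col a' * x') mod p"
      using e unfolding f1_def by (intro emb_inj[OF vnB[OF A(1)] vnB[OF A(3)] A(2) A(4) modF modF]) simp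
    then show "a = a' \<and> x = x'" using vn_inj by blast
  qed
  have c1: "card C1 = 50 * 2 ^ k"
  proof -
    have "card C1 = card (baseB \<times> Fk k)" unfolding C1_def by (rule card_image[OF inj1])
    also have "\<dots> = card baseB * card (Fk k)" by (rule card_cartesian_product)
    finally show ?thesis using card_baseB cardF by simp
  qed
  have cF0: "card (Fk k - {0}) = 2 ^ k - 1" using cardF finF zF by (simp add: card_Diff_singleton)
  have i2: "inj_on (\<lambda>x. emb k zv x 0) (Fk k - {0})"
  proof (rule inj_onI)
    fix x x' assume "x \<in> Fk k - {0}" "x' \<in> Fk k - {0}" "emb k zv x 0 = emb k zv x' 0"
    then show "x = x'" using sep[of zv zv x x' 0 0] zvB zF by blast
  qed
  have i3: "inj_on (\<lambda>y. emb k zv 0 y) (Fk k - {0})"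
  proof (rule inj_onI)
    fix x x' assume "x \<in> Fk k - {0}" "x' \<in> Fk k - {0}" "emb k zv 0 x = emb k zv 0 x'"
    then show "x = x'" using sep[of zv zv 0 0 x x'] zvB zF by blast
  qed
  have i4: "inj_on (\<lambda>x. emb k zv x x) (Fk k - {0})"
  proof (rule inj_onI)
    fix x x' assume "x \<in> Fk k - {0}" "x' \<in> Fk k - {0}" "emb k zv x x = emb k zv x' x'"
    then show "x = x'" using sep[of zv zv x x' x x'] zvB zF by blast
  qed
  have c2: "card C2 = 2 ^ k - 1" unfolding C2_def using card_image[OF i2] cF0 by simp
  have c3: "card C3 = 2 ^ k - 1" unfolding C3_def using card_image[OF i3] cF0 by simp
  have c4: "card C4 = 2 ^ k - 1" unfolding C4_def using card_image[OF i4] cF0 by simp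
  have fin1: "finite C1" unfolding C1_def using finB finF by simp
  have C1E: "\<exists>a x. a \<in> baseB \<and> x \<in> Fk k \<and> e = emb k (vn a) x ((col a * x) mod p)" if "e \<in> C1" for e
    using that unfolding C1_def f1_def by auto
  have fin2: "finite C2" "finite C3" "finite C4" unfolding C2_def C3_def C4_def using finF by auto
  have d12: "C1 \<inter> C2 = {}"
  proof (rule equals0I)
    fix e assume "e \<in> C1 \<inter> C2"
    then have e1: "e \<in> C1" and e2: "e \<in> C2" by auto
    obtain a x where A: "a \<in> baseB" "x \<in> Fk k" "e = emb k (vn a) x ((col a * x) mod p)" using C1E[OF e1] by blast
    obtain x' where B: "x' \<in> Fk k" "e = emb k zv x' 0" using e2 unfolding C2_def by auto
    show False using A B sep[of "vn a" zv x x' "(col a * x) mod p" 0] vnB vnz zvB modF zF by auto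
  qed
  have d13: "C1 \<inter> C3 = {}"
  proof (rule equals0I)
    fix e assume "e \<in> C1 \<inter> C3"
    then have e1: "e \<in> C1" and e2: "e \<in> C3" by auto
    obtain a x where A: "a \<in> baseB" "x \<in> Fk k" "e = emb k (vn a) x ((col a * x) mod p)" using C1E[OF e1] by blast
    obtain x' where B: "x' \<in> Fk k" "e = emb k zv 0 x'" using e2 unfolding C3_def by auto
    show False using A B sep[of "vn a" zv x 0 "(col a * x) mod p" x'] vnB vnz zvB modF zF by auto
  qed
  have d14: "C1 \<inter> C4 = {}"
  proof (rule equals0I)
    fix e assume "e \<in> C1 \<inter> C4"
    then have e1: "e \<in> C1" and e2: "e \<in> C4" by auto
    obtain a x where A: "a \<in> baseB" "x \<in> Fk k" "e = emb k (vn a) x ((col a * x) mod p)" using C1E[OF e1] by blast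
    obtain x' where B: "x' \<in> Fk k" "e = emb k zv x' x'" using e2 unfolding C4_def by auto
    show False using A B sep[of "vn a" zv x x' "(col a * x) mod p" x'] vnB vnz zvB modF zF by auto
  qed
  have d23: "C2 \<inter> C3 = {}"
  proof (rule equals0I)
    fix e assume "e \<in> C2 \<inter> C3"
    then have e1: "e \<in> C2" and e2: "e \<in> C3" by auto
    obtain x where A1: "x \<in> Fk k - {0}" "e = emb k zv x 0" using e1 unfolding C2_def by auto
    obtain x' where A2: "x' \<in> Fk k - {0}" "e = emb k zv 0 x'" using e2 unfolding C3_def by auto
    have A: "x \<in> Fk k - {0}" "x' \<in> Fk k - {0}" "e = emb k zv x 0" "e = emb k zv 0 x'" using A1 A2 by auto
    then show False using sep[of zv zv x 0 0 x'] zvB zF by auto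
  qed
  have d24: "C2 \<inter> C4 = {}"
  proof (rule equals0I)
    fix e assume "e \<in> C2 \<inter> C4"
    then have e1: "e \<in> C2" and e2: "e \<in> C4" by auto
    obtain x where A1: "x \<in> Fk k - {0}" "e = emb k zv x 0" using e1 unfolding C2_def by auto
    obtain x' where A2: "x' \<in> Fk k - {0}" "e = emb k zv x' x'" using e2 unfolding C4_def by auto
    have A: "x \<in> Fk k - {0}" "x' \<in> Fk k - {0}" "e = emb k zv x 0" "e = emb k zv x' x'" using A1 A2 by auto
    then show False using sep[of zv zv x x' 0 x'] zvB zF by auto
  qed
  have d34: "C3 \<inter> C4 = {}"
  proof (rule equals0I)
    fix e assume "e \<in> C3 \<inter> C4"
    then have e1: "e \<in> C3" and e2: "e \<in> C4" by auto
    obtain x where A1: "x \<in> Fk k - {0}" "e = emb k zv 0 x" using e1 unfolding C3_def by auto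
    obtain x' where A2: "x' \<in> Fk k - {0}" "e = emb k zv x' x'" using e2 unfolding C4_def by auto
    have A: "x \<in> Fk k - {0}" "x' \<in> Fk k - {0}" "e = emb k zv 0 x" "e = emb k zv x' x'" using A1 A2 by auto
    then show False using sep[of zv zv 0 x' x x'] zvB zF by auto
  qed
  have cardC: "card C = 53 * 2 ^ k - 3"
  proof -
    have "card (C1 \<union> C2) = card C1 + card C2" using fin1 fin2(1) d12 by (rule card_Un_disjoint)
    moreover have "card (C1 \<union> C2 \<union> C3) = card (C1 \<union> C2) + card C3"
      using fin1 fin2 d13 d23 by (intro card_Un_disjoint) auto
    moreover have "card (C1 \<union> C2 \<union> C3 \<union> C4) = card (C1 \<union> C2 \<union> C3) + card C4"
      using fin1 fin2 d14 d24 d34 by (intro card_Un_disjoint) auto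
    ultimately have "card C = card C1 + card C2 + card C3 + card C4" unfolding C_def by simp
    also have "\<dots> = 50 * 2 ^ k + 3 * (2 ^ k - 1)" using c1 c2 c3 c4 by simp
    also have "\<dots> = 53 * 2 ^ k - 3" using arith1[of "2 ^ k"] by simp
    finally show ?thesis .
  qed
  have finC: "finite C" unfolding C_def using fin1 fin2 by simp
  have Csub: "C \<subseteq> bvecs (10 + 2 * k)"
    unfolding C_def C1_def C2_def C3_def C4_def f1_def using emb_bv vnB zvB by auto
  have zC: "zv \<notin> C"
  proof
    assume "zv \<in> C"
    then consider "zv \<in> C1" | "zv \<in> C2" | "zv \<in> C3" | "zv \<in> C4" unfolding C_def by blast
    then show False
    proof cases
      case 1
      then obtain a x where A: "a \<in> baseB" "x \<in> Fk k" "zv = emb k (vn a) x ((col a * x) mod p)"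
        using C1E by blast
      then show False using sep[of "vn a" zv x 0 "(col a * x) mod p" 0] vnB vnz zvB modF zF emb_zero by auto
    next
      case 2
      then obtain x where A: "x \<in> Fk k - {0}" "zv = emb k zv x 0" unfolding C2_def by auto
      then show False using sep[of zv zv x 0 0 0] zvB zF emb_zero by auto
    next
      case 3
      then obtain x where A: "x \<in> Fk k - {0}" "zv = emb k zv 0 x" unfolding C3_def by auto
      then show False using sep[of zv zv 0 0 x 0] zvB zF emb_zero by auto
    next
      case 4
      then obtain x where A: "x \<in> Fk k - {0}" "zv = emb k zv x x" unfolding C4_def by auto
      then show False using sep[of zv zv x 0 x 0] zvB zF emb_zero by auto
    qed
  qed
  have tri: "\<exists>a\<in>C. \<exists>b\<in>C. a \<noteq> b \<and> xorv a b \<in> C"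
  proof -
    have t1: "emb k zv 1 0 \<in> C" unfolding C_def C2_def using zF by auto
    have t2: "emb k zv 0 1 \<in> C" unfolding C_def C3_def using zF by auto
    have t3: "emb k zv 1 0 \<noteq> emb k zv 0 1" using sep[of zv zv 1 0 0 1] zvB zF by simp
    have "xorv zv zv = zv" by (simp add: xorv_def zv_def fun_eq_iff)
    then have "xorv (emb k zv 1 0) (emb k zv 0 1) = emb k zv 1 1"
      by (simp add: emb_xor)
    then have t4: "xorv (emb k zv 1 0) (emb k zv 0 1) \<in> C" unfolding C_def C4_def using zF by auto
    show ?thesis using t1 t2 t3 t4 by blast
  qed
  have small: "53 * 2 ^ k - 3 + 1 < (2::nat) ^ (10 + 2 * k)"
  proof -
    have e1: "(2::nat) ^ (10 + 2 * k) = 2 ^ 10 * 2 ^ (2 * k)" by (rule power_add)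
    have e2: "(2::nat) ^ (2 * k) = 2 ^ k * 2 ^ k" by (metis mult_2 power_add)
    have "(1::nat) \<le> 2 ^ k" by simp
    then have "53 * 2 ^ k - 3 + 1 < 1024 * (2 ^ k * (2::nat) ^ k)" by (rule arith3)
    then show ?thesis unfolding e1 e2 by simp
  qed
  have xz: "xorv a zv = a" "xorv zv a = a" for a by (auto simp: xorv_def zv_def)
  have sat: "\<forall>s\<in>bvecs (10 + 2 * k). s = zv \<or> s \<in> C \<or> (\<exists>a\<in>C. \<exists>b\<in>C. a \<noteq> b \<and> s = xorv a b)"
  proof
    fix s assume sB: "s \<in> bvecs (10 + 2 * k)"
    obtain h u v where huv: "h \<in> bvecs 10" "u \<in> Fk k" "v \<in> Fk k" "s = emb k h u v"
      using emb_surj[OF k0 sB] by blast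
    obtain m where m: "m < 2 ^ 10" "h = vn m" using bvecs_vn[OF huv(1)] by blast
    consider "m = 0" | "m \<in> baseB" | a where "a \<in> baseB" "xor a m \<in> baseB" "m \<noteq> 0"
      using base_cover[OF m(1)] by blast
    then show "s = zv \<or> s \<in> C \<or> (\<exists>a\<in>C. \<exists>b\<in>C. a \<noteq> b \<and> s = xorv a b)"
    proof cases
      case 1
      then have h0: "h = zv" using m vn_zero by simp
      show ?thesis
      proof (cases "u = 0")
        case True
        show ?thesis
        proof (cases "v = 0")
          case True then show ?thesis using \<open>u = 0\<close> huv h0 emb_zero by simp
        next
          case False then have "s \<in> C3" using \<open>u = 0\<close> huv h0 unfolding C3_def by auto
          then show ?thesis unfolding C_def by simp
        qed
      next
        case u0: False
        show ?thesis
        proof (cases "v = 0")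
          case True then have "s \<in> C2" using u0 huv h0 unfolding C2_def by auto
          then show ?thesis unfolding C_def by simp
        next
          case v0: False
          show ?thesis
          proof (cases "u = v")
            case True then have "s \<in> C4" using v0 huv h0 unfolding C4_def by auto
            then show ?thesis unfolding C_def by simp
          next
            case False
            have uv: "u + v \<noteq> 0" using False padd_eq0 by blast
            have uvF: "u + v \<in> Fk k" using Fk_add[OF huv(2,3)] .
            have A: "emb k zv (u + v) 0 \<in> C" unfolding C_def C2_def using uv uvF by auto
            have B: "emb k zv v v \<in> C" unfolding C_def C4_def using v0 huv by auto
            have AB: "emb k zv (u + v) 0 \<noteq> emb k zv v v"
              using sep[of zv zv "u + v" v 0 v] zvB Fk_add[OF huv(2,3)] huv(3) zF(1) v0 by auto
            have "xorv (emb k zv (u + v) 0) (emb k zv v v) = emb k zv u v"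
              unfolding emb_xor xz(1) padd_cancel2 by simp
            then have "s = xorv (emb k zv (u + v) 0) (emb k zv v v)" using huv h0 by simp
            then show ?thesis using A B AB by blast
          qed
        qed
      qed
    next
      case 2
      define w where "w = (col m * u) mod p"
      have wF: "w \<in> Fk k" unfolding w_def by (rule modF)
      have P: "emb k h u w \<in> C" using inC1[OF 2 huv(2)] m unfolding C_def w_def by simp
      show ?thesis
      proof (cases "v = w")
        case True then show ?thesis using P huv by simp
      next
        case False
        have vw: "v + w \<noteq> 0" using False padd_eq0 by blast
        have vwF: "v + w \<in> Fk k" using Fk_add[OF huv(3) wF] .
        have Q: "emb k zv 0 (v + w) \<in> C" unfolding C_def C3_def using vw vwF by auto
        have hz: "h \<noteq> zv" using vnz[OF 2] m by simp
        have PQ: "emb k h u w \<noteq> emb k zv 0 (v + w)"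
          using sep[of h zv u 0 w "v + w"] huv(1) zvB huv(2) zF(1) wF Fk_add[OF huv(3) wF] hz by auto
        have wv: "w + (v + w) = v" by (metis add.commute padd_cancel1)
        have "xorv (emb k h u w) (emb k zv 0 (v + w)) = emb k h u v"
          unfolding emb_xor xz(1) wv by simp
        then have "s = xorv (emb k h u w) (emb k zv 0 (v + w))" using huv(4) by simp
        then show ?thesis using P Q PQ by blast
      qed
    next
      case 3
      define b where "b = xor a m"
      have aB: "a \<in> baseB" and bB: "b \<in> baseB" using 3 by (auto simp: b_def)
      have abm: "xor a b = m" unfolding b_def by (simp add: xor.assoc[symmetric])
      then have hab: "h = xorv (vn a) (vn b)" using m by (simp add: vn_xor[symmetric])
      have ab: "a \<noteq> b"
      proof
        assume "a = b"
        then have "xor a b = 0" by simp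
        then show False using abm 3 by simp
      qed
      define c1 where "c1 = col a"
      define c2 where "c2 = col b"
      define dd where "dd = c1 + c2"
      have dd0: "dd \<noteq> 0"
      proof
        assume "dd = 0"
        then have "c1 = c2" unfolding dd_def by (rule padd_eq0)
        then have "a = b" using col_inj[OF aB bB] by (simp add: c1_def c2_def)
        then show False using ab by simp
      qed
      have ddk: "degree dd < degree p"
        using degree_add_le_max[of c1 c2] degree_col[of a] degree_col[of b] dp k6
        by (simp add: dd_def c1_def c2_def)
      obtain iw where iw: "(dd * iw) mod p = 1"
        using inv_exists[OF nf _ _ dd0 ddk] dp k6 k8 by auto
      define x1 where "x1 = (iw * (v + c2 * u)) mod p"
      define x2 where "x2 = u + x1"
      have x1F: "x1 \<in> Fk k" unfolding x1_def by (rule modF)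
      have x2F: "x2 \<in> Fk k" unfolding x2_def using Fk_add[OF huv(2) x1F] .
      have P1: "emb k (vn a) x1 ((c1 * x1) mod p) \<in> C" using inC1[OF aB x1F] unfolding C_def c1_def by simp
      have P2: "emb k (vn b) x2 ((c2 * x2) mod p) \<in> C" using inC1[OF bB x2F] unfolding C_def c2_def by simp
      have "vn a \<noteq> vn b" using ab vn_inj by blast
      then have P12: "emb k (vn a) x1 ((c1 * x1) mod p) \<noteq> emb k (vn b) x2 ((c2 * x2) mod p)"
        using sep[of "vn a" "vn b" x1 x2 "(c1 * x1) mod p" "(c2 * x2) mod p"] vnB[OF aB] vnB[OF bB] x1F x2F modF
        by blast
      have sx: "x1 + x2 = u" unfolding x2_def by (metis add.commute padd_cancel1)
      have ring: "c1 * x1 + c2 * x2 = dd * x1 + c2 * u"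
        unfolding x2_def dd_def by (simp add: algebra_simps)
      have sy: "(c1 * x1) mod p + (c2 * x2) mod p = v"
      proof -
        have "(c1 * x1) mod p + (c2 * x2) mod p \<in> Fk k" by (rule Fk_add[OF modF modF])
        then have "(c1 * x1) mod p + (c2 * x2) mod p = ((c1 * x1) mod p + (c2 * x2) mod p) mod p"
          using Fk_modid[OF dp] by simp
        also have "\<dots> = (c1 * x1 + c2 * x2) mod p" by (simp add: mod_add_eq)
        also have "\<dots> = (dd * x1 + c2 * u) mod p" by (simp add: ring)
        also have "\<dots> = (dd * (iw * (v + c2 * u)) + c2 * u) mod p"
          by (rule mod_lift) (simp add: x1_def mod_mult_right_eq)
        also have "\<dots> = ((dd * iw) * (v + c2 * u) + c2 * u) mod p" by (simp add: mult.assoc)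
        also have "\<dots> = (((dd * iw) mod p) * (v + c2 * u) + c2 * u) mod p"
          by (rule mod_lift) (simp add: mod_mult_left_eq)
        also have "\<dots> = ((v + c2 * u) + c2 * u) mod p" using iw by simp
        also have "\<dots> = v mod p" by (simp only: padd_cancel2)
        also have "\<dots> = v" using Fk_modid[OF dp huv(3)] .
        finally show ?thesis .
      qed
      have "xorv (emb k (vn a) x1 ((c1 * x1) mod p)) (emb k (vn b) x2 ((c2 * x2) mod p)) = emb k h u v"
        unfolding emb_xor sx sy hab ..
      then have "s = xorv (emb k (vn a) x1 ((c1 * x1) mod p)) (emb k (vn b) x2 ((c2 * x2) mod p))"
        using huv(4) by simp
      then show ?thesis using P1 P2 P12 by blast
    qed
  qed
  show ?thesis
    by (rule code_from_set[OF finC Csub zC cardC sat tri small])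
qed

lemma inst:
  fixes p :: "bit poly"
  assumes "\<forall>f. 1 \<le> degree f \<and> degree f \<le> 4 \<longrightarrow> \<not> f dvd p" "degree p = k" "6 \<le> k" "k \<le> 8"
    "n = 53 * 2 ^ k - 3" "r = 10 + 2 * k"
  shows "\<exists>H. is_pc_matrix n r H \<and> min_dist n r H = 3 \<and> covering_radius n r H = 2"
  using construction[OF assms(1-4)] assms(5,6) by simp

lemma A22: "\<exists>H. is_pc_matrix 3389 22 H \<and> min_dist 3389 22 H = 3 \<and> covering_radius 3389 22 H = 2"
  by (rule inst[OF nf6 deg_p(1)]) simp_all

lemma A24: "\<exists>H. is_pc_matrix 6781 24 H \<and> min_dist 6781 24 H = 3 \<and> covering_radius 6781 24 H = 2"
  by (rule inst[OF nf7 deg_p(2)]) simp_all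

lemma A26: "\<exists>H. is_pc_matrix 13565 26 H \<and> min_dist 13565 26 H = 3 \<and> covering_radius 13565 26 H = 2"
  by (rule inst[OF nf8 deg_p(3)]) simp_all

lemma ell_le: "\<exists>H. is_pc_matrix n r H \<and> min_dist n r H = 3 \<and> covering_radius n r H = 2 \<Longrightarrow> ell2 r 2 \<le> n"
  unfolding ell2_def by (rule Least_le) blast

theorem theorem5p5:
  shows "(\<forall>r \<in> {22, 24, 26::nat}.
            \<exists>H. is_pc_matrix (53 * 2 ^ (r div 2 - 5) - 3) r H
               \<and> min_dist (53 * 2 ^ (r div 2 - 5) - 3) r H = 3
               \<and> covering_radius (53 * 2 ^ (r div 2 - 5) - 3) r H = 2)
       \<and> ell2 22 2 \<le> 3389 \<and> ell2 24 2 \<le> 6781 \<and> ell2 26 2 \<le> 13565"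
proof -
  have "\<forall>r \<in> {22, 24, 26::nat}.
            \<exists>H. is_pc_matrix (53 * 2 ^ (r div 2 - 5) - 3) r H
               \<and> min_dist (53 * 2 ^ (r div 2 - 5) - 3) r H = 3
               \<and> covering_radius (53 * 2 ^ (r div 2 - 5) - 3) r H = 2"
    using A22 A24 A26 by simp
  then show ?thesis using ell_le[OF A22] ell_le[OF A24] ell_le[OF A26] by simp
qed

end
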